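(* Let $k$ be a field, $B$ a unital associative $k$-algebra and $(J_i)_{i\in I}$ a covering of $B$, i.e.\ a finite family of two-sided ideals with $\bigcap_{i\in I}J_i=\{0\}$. Let $B_i=B/J_i$, $B_{ij}=B/(J_i+J_j)$, $\pi_i:B\to B_i$, $\pi_{ij}:B\to B_{ij}$, $\pi^i_j:B_i\to B_{ij}$ the canonical surjections, $A=\bigoplus_{i\in I}B_i$, and let $\mathcal{C}=\bigoplus_{i,j\in I}B_{ij}$ be the $A$-coring with bimodule structure $(a_i)_i\cdot(a_{jk})_{j,k}\cdot(a'_l)_l=(\pi^j_k(a_j)a_{jk}\pi^k_j(a'_k))_{j,k}$, coproduct $\Delta_{\mathcal{C}}((\pi_{ij}(b_{ij}))_{i,j})=\sum_{k\in I}(\pi_{il}(b_{ik}))_{i,l}\otimes_A(\pi_{mj}(\delta_{kj}1_B))_{m,j}$ and counit $\varepsilon_{\mathcal{C}}((\pi_{ij}(b_{ij}))_{i,j})=(\pi_i(b_{ii}))_i$. Set $g=(\pi_{ij}(1_B))_{i,j\in I}\in\mathcal{C}$. Then: (1) If $(J_i)_{i\in I}$ is a complete covering of $B$, then $(\mathcal{C},g)$ is a Galois coring. (2) If $A$ is a faithfully flat left or right $B$-module, then $(J_i)_{i\in I}$ is a complete covering of $B$.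
   Context: $\delta_{kj}1_B$ is $1_B$ if $k=j$ and $0$ otherwise. $A$ is a $B$-bimodule via the algebra map $\iota:B\to A$, $b\mapsto(\pi_i(b))_{i\in I}$. The covering completion of $B$ is $B_c=\{(a_i)_{i\in I}\in A:\ \pi^i_j(a_i)=\pi^j_i(a_j)\text{ for all }i,j\}$; the covering is complete if $\kappa:B\to B_c$, $b\mapsto(\pi_i(b))_{i\in I}$, is surjective. For an $A$-coring $\mathcal{C}$ (an $A$-bimodule with coassociative counital $A$-bimodule maps $\Delta_{\mathcal{C}}:\mathcal{C}\to\mathcal{C}\otimes_A\mathcal{C}$, $\varepsilon_{\mathcal{C}}:\mathcal{C}\to A$), an element $g$ is grouplike if $\Delta_{\mathcal{C}}(g)=g\otimes_A g$ and $\varepsilon_{\mathcal{C}}(g)=1_A$; its coinvariants are $A^{co\mathcal{C}}_g=\{b\in A: b\cdot g=g\cdot b\}$, a subalgebra of $A$. $(\mathcal{C},g)$ with $g$ grouplike is a Galois coring if, with $B'=A^{co\mathcal{C}}_g$, the map $A\otimes_{B'}A\to\mathcal{C}$, $a\otimes_{B'}a'\mapsto a\cdot g\cdot a'$, is an isomorphism. *)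

theory Defs
  imports "HOL-Algebra.Algebra"
begin

definition k_algebra :: "('k,'e) ring_scheme \<Rightarrow> ('b,'c) ring_scheme \<Rightarrow> ('k \<Rightarrow> 'b) \<Rightarrow> bool" where
  "k_algebra K B phi \<longleftrightarrow> field K \<and> ring B \<and> phi \<in> ring_hom K B \<and>
     (\<forall>x\<in>carrier K. \<forall>b\<in>carrier B. phi x \<otimes>\<^bsub>B\<^esub> b = b \<otimes>\<^bsub>B\<^esub> phi x)"

definition fs_single :: "'a \<Rightarrow> 'a \<Rightarrow> int" where
  "fs_single p = (\<lambda>q. if q = p then 1 else 0)"

text \<open>finitely supported integer-valued functions supported in S (free abelian group on S)\<close>
definition fsums :: "'a set \<Rightarrow> ('a \<Rightarrow> int) set" where
  "fsums S = {h. finite {p. h p \<noteq> 0} \<and> {p. h p \<noteq> 0} \<subseteq> S}"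

definition fs_map :: "('a \<Rightarrow> 'b) \<Rightarrow> ('a \<Rightarrow> int) \<Rightarrow> ('b \<Rightarrow> int)" where
  "fs_map g h = (\<lambda>q. \<Sum>p\<in>{p. h p \<noteq> 0 \<and> g p = q}. h p)"

text \<open>For a right R-module M (addition addM, action actM) and a left R-module N
(addition addN, action actN), the subgroup of the free abelian group on M x N generated by
the bilinearity and balancing relations.  The tensor product M (x)_R N is the quotient of
the free abelian group fsums (M x N) by this subgroup: two formal sums represent the same
element of M (x)_R N iff their difference lies in tens_rel.\<close>
inductive_set tens_rel :: "'r set \<Rightarrow> 'm set \<Rightarrow> ('m \<Rightarrow> 'm \<Rightarrow> 'm) \<Rightarrow> ('m \<Rightarrow> 'r \<Rightarrow> 'm)
    \<Rightarrow> 'n set \<Rightarrow> ('n \<Rightarrow> 'n \<Rightarrow> 'n) \<Rightarrow> ('r \<Rightarrow> 'n \<Rightarrow> 'n) \<Rightarrow> ('m \<times> 'n \<Rightarrow> int) set"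
  for R M addM actM N addN actN
where
  zero: "(\<lambda>_. 0) \<in> tens_rel R M addM actM N addN actN"
| add: "f \<in> tens_rel R M addM actM N addN actN \<Longrightarrow> h \<in> tens_rel R M addM actM N addN actN
        \<Longrightarrow> (\<lambda>p. f p + h p) \<in> tens_rel R M addM actM N addN actN"
| neg: "f \<in> tens_rel R M addM actM N addN actN \<Longrightarrow> (\<lambda>p. - f p) \<in> tens_rel R M addM actM N addN actN"
| addl: "m \<in> M \<Longrightarrow> m' \<in> M \<Longrightarrow> n \<in> N \<Longrightarrow>
        (\<lambda>p. fs_single (addM m m', n) p - fs_single (m, n) p - fs_single (m', n) p)
          \<in> tens_rel R M addM actM N addN actN"
| addr: "m \<in> M \<Longrightarrow> n \<in> N \<Longrightarrow> n' \<in> N \<Longrightarrow>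
        (\<lambda>p. fs_single (m, addN n n') p - fs_single (m, n) p - fs_single (m, n') p)
          \<in> tens_rel R M addM actM N addN actN"
| bal: "m \<in> M \<Longrightarrow> r \<in> R \<Longrightarrow> n \<in> N \<Longrightarrow>
        (\<lambda>p. fs_single (actM m r, n) p - fs_single (m, actN r n) p)
          \<in> tens_rel R M addM actM N addN actN"

definition lmod :: "('b,'c) ring_scheme \<Rightarrow> 'z set \<Rightarrow> ('z \<Rightarrow> 'z \<Rightarrow> 'z) \<Rightarrow> 'z \<Rightarrow> ('b \<Rightarrow> 'z \<Rightarrow> 'z) \<Rightarrow> bool" where
  "lmod B N addN zN act \<longleftrightarrow> comm_group \<lparr>carrier = N, monoid.mult = addN, one = zN\<rparr> \<and>
     (\<forall>b\<in>carrier B. \<forall>n\<in>N. act b n \<in> N) \<and>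
     (\<forall>b\<in>carrier B. \<forall>n\<in>N. \<forall>n'\<in>N. act b (addN n n') = addN (act b n) (act b n')) \<and>
     (\<forall>b\<in>carrier B. \<forall>b'\<in>carrier B. \<forall>n\<in>N. act (b \<oplus>\<^bsub>B\<^esub> b') n = addN (act b n) (act b' n)) \<and>
     (\<forall>b\<in>carrier B. \<forall>b'\<in>carrier B. \<forall>n\<in>N. act (b \<otimes>\<^bsub>B\<^esub> b') n = act b (act b' n)) \<and>
     (\<forall>n\<in>N. act \<one>\<^bsub>B\<^esub> n = n)"

definition rmod :: "('b,'c) ring_scheme \<Rightarrow> 'z set \<Rightarrow> ('z \<Rightarrow> 'z \<Rightarrow> 'z) \<Rightarrow> 'z \<Rightarrow> ('z \<Rightarrow> 'b \<Rightarrow> 'z) \<Rightarrow> bool" where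
  "rmod B N addN zN act \<longleftrightarrow> comm_group \<lparr>carrier = N, monoid.mult = addN, one = zN\<rparr> \<and>
     (\<forall>b\<in>carrier B. \<forall>n\<in>N. act n b \<in> N) \<and>
     (\<forall>b\<in>carrier B. \<forall>n\<in>N. \<forall>n'\<in>N. act (addN n n') b = addN (act n b) (act n' b)) \<and>
     (\<forall>b\<in>carrier B. \<forall>b'\<in>carrier B. \<forall>n\<in>N. act n (b \<oplus>\<^bsub>B\<^esub> b') = addN (act n b) (act n b')) \<and>
     (\<forall>b\<in>carrier B. \<forall>b'\<in>carrier B. \<forall>n\<in>N. act n (b \<otimes>\<^bsub>B\<^esub> b') = act (act n b) b') \<and>
     (\<forall>n\<in>N. act n \<one>\<^bsub>B\<^esub> = n)"

definition lmod_hom :: "('b,'c) ring_scheme \<Rightarrow> 'z set \<Rightarrow> ('z \<Rightarrow> 'z \<Rightarrow> 'z) \<Rightarrow> ('b \<Rightarrow> 'z \<Rightarrow> 'z)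
    \<Rightarrow> 'y set \<Rightarrow> ('y \<Rightarrow> 'y \<Rightarrow> 'y) \<Rightarrow> ('b \<Rightarrow> 'y \<Rightarrow> 'y) \<Rightarrow> ('z \<Rightarrow> 'y) \<Rightarrow> bool" where
  "lmod_hom B N addN act N2 addN2 act2 f \<longleftrightarrow> (\<forall>n\<in>N. f n \<in> N2) \<and>
     (\<forall>n\<in>N. \<forall>n'\<in>N. f (addN n n') = addN2 (f n) (f n')) \<and>
     (\<forall>b\<in>carrier B. \<forall>n\<in>N. f (act b n) = act2 b (f n))"

definition rmod_hom :: "('b,'c) ring_scheme \<Rightarrow> 'z set \<Rightarrow> ('z \<Rightarrow> 'z \<Rightarrow> 'z) \<Rightarrow> ('z \<Rightarrow> 'b \<Rightarrow> 'z)
    \<Rightarrow> 'y set \<Rightarrow> ('y \<Rightarrow> 'y \<Rightarrow> 'y) \<Rightarrow> ('y \<Rightarrow> 'b \<Rightarrow> 'y) \<Rightarrow> ('z \<Rightarrow> 'y) \<Rightarrow> bool" where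
  "rmod_hom B N addN act N2 addN2 act2 f \<longleftrightarrow> (\<forall>n\<in>N. f n \<in> N2) \<and>
     (\<forall>n\<in>N. \<forall>n'\<in>N. f (addN n n') = addN2 (f n) (f n')) \<and>
     (\<forall>b\<in>carrier B. \<forall>n\<in>N. f (act n b) = act2 (f n) b)"

text \<open>The ring A, viewed as a right B-module via the ring map iota (a . b = a iota(b)), is
faithfully flat: the functor A (x)_B - on left B-modules preserves injectivity (flat) and
A (x)_B N = 0 implies N = 0 (faithful).  Modules range over modules whose carrier lives in
the type 'z.\<close>
definition ff_right :: "('b,'c) ring_scheme \<Rightarrow> ('a,'d) ring_scheme \<Rightarrow> ('b \<Rightarrow> 'a) \<Rightarrow> 'z itself \<Rightarrow> bool" where
  "ff_right B A iota (U :: 'z itself) \<longleftrightarrow>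
     (\<forall>(N :: 'z set) addN zN act (N' :: 'z set) addN' zN' act' f.
        lmod B N addN zN act \<and> lmod B N' addN' zN' act' \<and>
        lmod_hom B N' addN' act' N addN act f \<and> inj_on f N' \<longrightarrow>
        (\<forall>h\<in>fsums (carrier A \<times> N').
           fs_map (\<lambda>(a, n). (a, f n)) h
             \<in> tens_rel (carrier B) (carrier A) (add A) (\<lambda>a b. a \<otimes>\<^bsub>A\<^esub> iota b) N addN act
           \<longrightarrow> h \<in> tens_rel (carrier B) (carrier A) (add A) (\<lambda>a b. a \<otimes>\<^bsub>A\<^esub> iota b) N' addN' act'))
   \<and> (\<forall>(N :: 'z set) addN zN act.
        lmod B N addN zN act \<and>
        fsums (carrier A \<times> N)
          \<subseteq> tens_rel (carrier B) (carrier A) (add A) (\<lambda>a b. a \<otimes>\<^bsub>A\<^esub> iota b) N addN act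
        \<longrightarrow> N = {zN})"

definition ff_left :: "('b,'c) ring_scheme \<Rightarrow> ('a,'d) ring_scheme \<Rightarrow> ('b \<Rightarrow> 'a) \<Rightarrow> 'z itself \<Rightarrow> bool" where
  "ff_left B A iota (U :: 'z itself) \<longleftrightarrow>
     (\<forall>(N :: 'z set) addN zN act (N' :: 'z set) addN' zN' act' f.
        rmod B N addN zN act \<and> rmod B N' addN' zN' act' \<and>
        rmod_hom B N' addN' act' N addN act f \<and> inj_on f N' \<longrightarrow>
        (\<forall>h\<in>fsums (N' \<times> carrier A).
           fs_map (\<lambda>(n, a). (f n, a)) h
             \<in> tens_rel (carrier B) N addN act (carrier A) (add A) (\<lambda>b a. iota b \<otimes>\<^bsub>A\<^esub> a)
           \<longrightarrow> h \<in> tens_rel (carrier B) N' addN' act' (carrier A) (add A) (\<lambda>b a. iota b \<otimes>\<^bsub>A\<^esub> a)))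
   \<and> (\<forall>(N :: 'z set) addN zN act.
        rmod B N addN zN act \<and>
        fsums (N \<times> carrier A)
          \<subseteq> tens_rel (carrier B) N addN act (carrier A) (add A) (\<lambda>b a. iota b \<otimes>\<^bsub>A\<^esub> a)
        \<longrightarrow> N = {zN})"

text \<open>C is an A-bimodule with additive structure given by the ring record C (only its
additive part is used), left action lact, right action ract; Delta maps C to formal sums
representing elements of C (x)_A C; eps : C -> A.\<close>
definition grouplike ::
  "('a,'d) ring_scheme \<Rightarrow> ('x,'e) ring_scheme \<Rightarrow> ('a \<Rightarrow> 'x \<Rightarrow> 'x) \<Rightarrow> ('x \<Rightarrow> 'a \<Rightarrow> 'x)
   \<Rightarrow> ('x \<Rightarrow> ('x \<times> 'x \<Rightarrow> int)) \<Rightarrow> ('x \<Rightarrow> 'a) \<Rightarrow> 'x \<Rightarrow> bool" where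
  "grouplike A C lact ract Delta eps g \<longleftrightarrow> g \<in> carrier C \<and>
     (\<lambda>p. Delta g p - fs_single (g, g) p)
        \<in> tens_rel (carrier A) (carrier C) (add C) ract (carrier C) (add C) lact \<and>
     eps g = \<one>\<^bsub>A\<^esub>"

definition coinvariants ::
  "('a,'d) ring_scheme \<Rightarrow> ('a \<Rightarrow> 'x \<Rightarrow> 'x) \<Rightarrow> ('x \<Rightarrow> 'a \<Rightarrow> 'x) \<Rightarrow> 'x \<Rightarrow> 'a set" where
  "coinvariants A lact ract g = {b \<in> carrier A. lact b g = ract g b}"

definition can_map ::
  "('x,'e) ring_scheme \<Rightarrow> ('a \<Rightarrow> 'x \<Rightarrow> 'x) \<Rightarrow> ('x \<Rightarrow> 'a \<Rightarrow> 'x) \<Rightarrow> 'x \<Rightarrow> ('a \<times> 'a \<Rightarrow> int) \<Rightarrow> 'x" where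
  "can_map C lact ract g f =
     (\<Oplus>\<^bsub>C\<^esub> p\<in>{p. f p \<noteq> 0}. [f p] \<cdot>\<^bsub>C\<^esub> lact (fst p) (ract g (snd p)))"

definition galois_coring ::
  "('a,'d) ring_scheme \<Rightarrow> ('x,'e) ring_scheme \<Rightarrow> ('a \<Rightarrow> 'x \<Rightarrow> 'x) \<Rightarrow> ('x \<Rightarrow> 'a \<Rightarrow> 'x)
   \<Rightarrow> ('x \<Rightarrow> ('x \<times> 'x \<Rightarrow> int)) \<Rightarrow> ('x \<Rightarrow> 'a) \<Rightarrow> 'x \<Rightarrow> bool" where
  "galois_coring A C lact ract Delta eps g \<longleftrightarrow>
     grouplike A C lact ract Delta eps g \<and>
     (\<forall>f\<in>fsums (carrier A \<times> carrier A).
        can_map C lact ract g f = \<zero>\<^bsub>C\<^esub> \<longleftrightarrow>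
        f \<in> tens_rel (coinvariants A lact ract g) (carrier A) (add A) (monoid.mult A)
                      (carrier A) (add A) (monoid.mult A)) \<and>
     (\<forall>c\<in>carrier C. \<exists>f\<in>fsums (carrier A \<times> carrier A). can_map C lact ract g f = c)"

definition covering :: "('b,'c) ring_scheme \<Rightarrow> ('i \<Rightarrow> 'b set) \<Rightarrow> 'i set \<Rightarrow> bool" where
  "covering B J I \<longleftrightarrow> finite I \<and> (\<forall>i\<in>I. ideal (J i) B) \<and>
     carrier B \<inter> (\<Inter>i\<in>I. J i) = {\<zero>\<^bsub>B\<^esub>}"

abbreviation cov_Bij :: "('b,'c) ring_scheme \<Rightarrow> ('i \<Rightarrow> 'b set) \<Rightarrow> 'i \<Rightarrow> 'i \<Rightarrow> 'b set ring" where
  "cov_Bij B J i j \<equiv> B Quot (J i <+>\<^bsub>B\<^esub> J j)"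

definition cov_pi :: "('b,'c) ring_scheme \<Rightarrow> ('i \<Rightarrow> 'b set) \<Rightarrow> 'i \<Rightarrow> 'b \<Rightarrow> 'b set" where
  "cov_pi B J i b = J i +>\<^bsub>B\<^esub> b"

definition cov_pij :: "('b,'c) ring_scheme \<Rightarrow> ('i \<Rightarrow> 'b set) \<Rightarrow> 'i \<Rightarrow> 'i \<Rightarrow> 'b \<Rightarrow> 'b set" where
  "cov_pij B J i j b = (J i <+>\<^bsub>B\<^esub> J j) +>\<^bsub>B\<^esub> b"

definition cov_pit :: "('b,'c) ring_scheme \<Rightarrow> ('i \<Rightarrow> 'b set) \<Rightarrow> 'i \<Rightarrow> 'i \<Rightarrow> 'b set \<Rightarrow> 'b set" where
  "cov_pit B J i j Y = (J i <+>\<^bsub>B\<^esub> J j) <+>\<^bsub>B\<^esub> Y"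

definition cov_A :: "('b,'c) ring_scheme \<Rightarrow> ('i \<Rightarrow> 'b set) \<Rightarrow> 'i set \<Rightarrow> ('i \<Rightarrow> 'b set) ring" where
  "cov_A B J I = \<lparr>carrier = (\<Pi>\<^sub>E i\<in>I. carrier (B Quot J i)),
      monoid.mult = (\<lambda>a a'. \<lambda>i\<in>I. a i \<otimes>\<^bsub>B Quot J i\<^esub> a' i),
      monoid.one = (\<lambda>i\<in>I. \<one>\<^bsub>B Quot J i\<^esub>),
      ring.zero = (\<lambda>i\<in>I. \<zero>\<^bsub>B Quot J i\<^esub>),
      ring.add = (\<lambda>a a'. \<lambda>i\<in>I. a i \<oplus>\<^bsub>B Quot J i\<^esub> a' i)\<rparr>"

definition cov_iota :: "('b,'c) ring_scheme \<Rightarrow> ('i \<Rightarrow> 'b set) \<Rightarrow> 'i set \<Rightarrow> 'b \<Rightarrow> ('i \<Rightarrow> 'b set)" where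
  "cov_iota B J I b = (\<lambda>i\<in>I. cov_pi B J i b)"

definition cov_Bc :: "('b,'c) ring_scheme \<Rightarrow> ('i \<Rightarrow> 'b set) \<Rightarrow> 'i set \<Rightarrow> ('i \<Rightarrow> 'b set) set" where
  "cov_Bc B J I = {a \<in> carrier (cov_A B J I).
      \<forall>i\<in>I. \<forall>j\<in>I. cov_pit B J i j (a i) = cov_pit B J j i (a j)}"

definition complete_covering :: "('b,'c) ring_scheme \<Rightarrow> ('i \<Rightarrow> 'b set) \<Rightarrow> 'i set \<Rightarrow> bool" where
  "complete_covering B J I \<longleftrightarrow> (\<forall>a\<in>cov_Bc B J I. \<exists>b\<in>carrier B. cov_iota B J I b = a)"

text \<open>C = direct sum of the B_ij (additive structure; the multiplication is the
componentwise one and is not used)\<close>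
definition cov_C :: "('b,'c) ring_scheme \<Rightarrow> ('i \<Rightarrow> 'b set) \<Rightarrow> 'i set \<Rightarrow> ('i \<times> 'i \<Rightarrow> 'b set) ring" where
  "cov_C B J I = \<lparr>carrier = (\<Pi>\<^sub>E p\<in>I \<times> I. carrier (cov_Bij B J (fst p) (snd p))),
      monoid.mult = (\<lambda>c c'. \<lambda>p\<in>I \<times> I. c p \<otimes>\<^bsub>cov_Bij B J (fst p) (snd p)\<^esub> c' p),
      monoid.one = (\<lambda>p\<in>I \<times> I. \<one>\<^bsub>cov_Bij B J (fst p) (snd p)\<^esub>),
      ring.zero = (\<lambda>p\<in>I \<times> I. \<zero>\<^bsub>cov_Bij B J (fst p) (snd p)\<^esub>),
      ring.add = (\<lambda>c c'. \<lambda>p\<in>I \<times> I. c p \<oplus>\<^bsub>cov_Bij B J (fst p) (snd p)\<^esub> c' p)\<rparr>"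

definition cov_lact :: "('b,'c) ring_scheme \<Rightarrow> ('i \<Rightarrow> 'b set) \<Rightarrow> 'i set
    \<Rightarrow> ('i \<Rightarrow> 'b set) \<Rightarrow> ('i \<times> 'i \<Rightarrow> 'b set) \<Rightarrow> ('i \<times> 'i \<Rightarrow> 'b set)" where
  "cov_lact B J I a c = (\<lambda>(j, k)\<in>I \<times> I. cov_pit B J j k (a j) \<otimes>\<^bsub>cov_Bij B J j k\<^esub> c (j, k))"

definition cov_ract :: "('b,'c) ring_scheme \<Rightarrow> ('i \<Rightarrow> 'b set) \<Rightarrow> 'i set
    \<Rightarrow> ('i \<times> 'i \<Rightarrow> 'b set) \<Rightarrow> ('i \<Rightarrow> 'b set) \<Rightarrow> ('i \<times> 'i \<Rightarrow> 'b set)" where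
  "cov_ract B J I c a' = (\<lambda>(j, k)\<in>I \<times> I. c (j, k) \<otimes>\<^bsub>cov_Bij B J j k\<^esub> cov_pit B J k j (a' k))"

definition cov_rep :: "('b,'c) ring_scheme \<Rightarrow> ('i \<Rightarrow> 'b set) \<Rightarrow> 'i \<Rightarrow> 'i \<Rightarrow> ('i \<times> 'i \<Rightarrow> 'b set) \<Rightarrow> 'b" where
  "cov_rep B J i j c = (SOME b. b \<in> carrier B \<and> c (i, j) = cov_pij B J i j b)"

definition cov_Delta :: "('b,'c) ring_scheme \<Rightarrow> ('i \<Rightarrow> 'b set) \<Rightarrow> 'i set
    \<Rightarrow> ('i \<times> 'i \<Rightarrow> 'b set) \<Rightarrow> (('i \<times> 'i \<Rightarrow> 'b set) \<times> ('i \<times> 'i \<Rightarrow> 'b set) \<Rightarrow> int)" where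
  "cov_Delta B J I c = (\<lambda>q. \<Sum>k\<in>I. fs_single
      ((\<lambda>(i, l)\<in>I \<times> I. cov_pij B J i l (cov_rep B J i k c)),
       (\<lambda>(m, j)\<in>I \<times> I. cov_pij B J m j (if k = j then \<one>\<^bsub>B\<^esub> else \<zero>\<^bsub>B\<^esub>))) q)"

definition cov_eps :: "('b,'c) ring_scheme \<Rightarrow> ('i \<Rightarrow> 'b set) \<Rightarrow> 'i set
    \<Rightarrow> ('i \<times> 'i \<Rightarrow> 'b set) \<Rightarrow> ('i \<Rightarrow> 'b set)" where
  "cov_eps B J I c = (\<lambda>i\<in>I. cov_pi B J i (cov_rep B J i i c))"

definition cov_g :: "('b,'c) ring_scheme \<Rightarrow> ('i \<Rightarrow> 'b set) \<Rightarrow> 'i set \<Rightarrow> ('i \<times> 'i \<Rightarrow> 'b set)" where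
  "cov_g B J I = (\<lambda>(i, j)\<in>I \<times> I. cov_pij B J i j \<one>\<^bsub>B\<^esub>)"

end

theory Submission
  imports Defs
begin

lemma fsums_iff: "h \<in> fsums S \<longleftrightarrow> finite {p. h p \<noteq> 0} \<and> {p. h p \<noteq> 0} \<subseteq> S"
  by (simp add: fsums_def)

lemma fsums_zero: "(\<lambda>_. 0) \<in> fsums S"
  by (simp add: fsums_def)

lemma fsums_add: "f \<in> fsums S \<Longrightarrow> h \<in> fsums S \<Longrightarrow> (\<lambda>p. f p + h p) \<in> fsums S"
proof -
  assume a: "f \<in> fsums S" "h \<in> fsums S"
  have "{p. f p + h p \<noteq> 0} \<subseteq> {p. f p \<noteq> 0} \<union> {p. h p \<noteq> 0}" by auto
  with a show ?thesis unfolding fsums_def by (auto intro: finite_subset)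
qed

lemma fsums_neg: "f \<in> fsums S \<Longrightarrow> (\<lambda>p. - f p) \<in> fsums S"
  by (simp add: fsums_def)

lemma fsums_single: "p \<in> S \<Longrightarrow> fs_single p \<in> fsums S"
proof -
  assume "p \<in> S"
  moreover have "{q. fs_single p q \<noteq> 0} = {p}" by (auto simp: fs_single_def)
  ultimately show ?thesis by (simp add: fsums_def)
qed

lemma fsums_sum: "finite D \<Longrightarrow> (\<And>d. d \<in> D \<Longrightarrow> F d \<in> fsums S) \<Longrightarrow> (\<lambda>p. \<Sum>d\<in>D. F d p) \<in> fsums S"
proof (induction D rule: finite_induct)
  case empty then show ?case by (simp add: fsums_zero)
next
  case (insert x D') then show ?case by (simp add: fsums_add del: fsums_def)
qed

lemma fsums_diff3: "a \<in> S \<Longrightarrow> b \<in> S \<Longrightarrow> c \<in> S \<Longrightarrow>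
   (\<lambda>p. fs_single a p - fs_single b p - fs_single c p) \<in> fsums S"
proof -
  assume "a \<in> S" "b \<in> S" "c \<in> S"
  moreover have "{p. fs_single a p - fs_single b p - fs_single c p \<noteq> 0} \<subseteq> {a, b, c}"
    by (auto simp: fs_single_def)
  ultimately show ?thesis unfolding fsums_def by (auto intro: finite_subset)
qed

lemma fsums_diff2: "a \<in> S \<Longrightarrow> b \<in> S \<Longrightarrow>
   (\<lambda>p. fs_single a p - fs_single b p) \<in> fsums S"
proof -
  assume "a \<in> S" "b \<in> S"
  moreover have "{p. fs_single a p - fs_single b p \<noteq> 0} \<subseteq> {a, b}"
    by (auto simp: fs_single_def)
  ultimately show ?thesis unfolding fsums_def by (auto intro: finite_subset)
qed

lemma tens_rel_fsums:
  assumes "h \<in> tens_rel R M addM actM N addN actN"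
    and "\<And>m m'. m \<in> M \<Longrightarrow> m' \<in> M \<Longrightarrow> addM m m' \<in> M"
    and "\<And>n n'. n \<in> N \<Longrightarrow> n' \<in> N \<Longrightarrow> addN n n' \<in> N"
    and "\<And>m r. m \<in> M \<Longrightarrow> r \<in> R \<Longrightarrow> actM m r \<in> M"
    and "\<And>n r. n \<in> N \<Longrightarrow> r \<in> R \<Longrightarrow> actN r n \<in> N"
  shows "h \<in> fsums (M \<times> N)"
  using assms(1)
proof (induction rule: tens_rel.induct)
  case zero then show ?case by (rule fsums_zero)
next
  case (add f h) then show ?case by (intro fsums_add)
next
  case (neg f) then show ?case by (intro fsums_neg)
next
  case (addl m m' n)
  then show ?case
    using assms(2) by (intro fsums_diff3) auto
next
  case (addr m n n')
  then show ?case
    using assms(3) by (intro fsums_diff3) auto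
next
  case (bal m r n)
  then show ?case
    using assms(4,5) by (intro fsums_diff2) auto
qed

definition Psi :: "('g,'x) ring_scheme \<Rightarrow> ('p \<Rightarrow> 'g) \<Rightarrow> ('p \<Rightarrow> int) \<Rightarrow> 'g" where
  "Psi G phi h = finsum G (\<lambda>p. add_pow G (h p) (phi p)) {p. h p \<noteq> 0}"

lemma add_pow_int_zero: "add_pow G (0::int) x = \<zero>\<^bsub>G\<^esub>"
  by (simp add: add_pow_def)

context abelian_group
begin

lemma ab3: "a \<in> carrier G \<Longrightarrow> b \<in> carrier G \<Longrightarrow> a \<oplus> b \<ominus> a \<ominus> b = \<zero>"
proof -
  assume c: "a \<in> carrier G" "b \<in> carrier G"
  have "a \<oplus> b \<ominus> a \<ominus> b = (a \<ominus> a) \<oplus> (b \<ominus> b)"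
    using c by (simp add: a_minus_def a_assoc a_lcomm)
  also have "\<dots> = \<zero>" using c by (simp add: a_minus_def r_neg)
  finally show ?thesis .
qed

lemma Psi_superset:
  assumes "finite D" "{p. h p \<noteq> 0} \<subseteq> D" "phi \<in> D \<rightarrow> carrier G"
  shows "Psi G phi h = (\<Oplus>p\<in>D. add_pow G (h p) (phi p))"
  unfolding Psi_def
  by (rule add.finprod_mono_neutral_cong_left) (use assms in \<open>auto simp: add_pow_int_zero\<close>)

lemma Psi_closed:
  assumes "h \<in> fsums S" "phi \<in> S \<rightarrow> carrier G"
  shows "Psi G phi h \<in> carrier G"
  unfolding Psi_def using assms by (auto simp: fsums_def intro!: finsum_closed)

lemma Psi_add:
  assumes "f \<in> fsums S" "h \<in> fsums S" "phi \<in> S \<rightarrow> carrier G"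
  shows "Psi G phi (\<lambda>p. f p + h p) = Psi G phi f \<oplus> Psi G phi h"
proof -
  define D where "D = {p. f p \<noteq> 0} \<union> {p. h p \<noteq> 0}"
  have D: "finite D" "D \<subseteq> S" using assms by (auto simp: D_def fsums_def)
  have ph: "phi \<in> D \<rightarrow> carrier G" using D assms by auto
  have "Psi G phi (\<lambda>p. f p + h p) = (\<Oplus>p\<in>D. add_pow G (f p + h p) (phi p))"
    by (rule Psi_superset) (use D ph in \<open>auto simp: D_def\<close>)
  also have "\<dots> = (\<Oplus>p\<in>D. add_pow G (f p) (phi p) \<oplus> add_pow G (h p) (phi p))"
    by (rule finsum_cong') (use ph in \<open>auto simp: add.int_pow_mult Pi_iff\<close>)
  also have "\<dots> = (\<Oplus>p\<in>D. add_pow G (f p) (phi p)) \<oplus> (\<Oplus>p\<in>D. add_pow G (h p) (phi p))"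
    by (rule finsum_addf) (use ph in auto)
  also have "\<dots> = Psi G phi f \<oplus> Psi G phi h"
  proof -
    have e1: "Psi G phi f = (\<Oplus>p\<in>D. add_pow G (f p) (phi p))"
      by (rule Psi_superset) (use D ph in \<open>auto simp: D_def\<close>)
    have e2: "Psi G phi h = (\<Oplus>p\<in>D. add_pow G (h p) (phi p))"
      by (rule Psi_superset) (use D ph in \<open>auto simp: D_def\<close>)
    show ?thesis by (simp only: e1 e2)
  qed
  finally show ?thesis .
qed

lemma Psi_zero: "Psi G phi (\<lambda>_. 0) = \<zero>"
  by (simp add: Psi_def)

lemma Psi_neg:
  assumes "f \<in> fsums S" "phi \<in> S \<rightarrow> carrier G"
  shows "Psi G phi (\<lambda>p. - f p) = \<ominus> Psi G phi f"
proof -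
  have "Psi G phi f \<oplus> Psi G phi (\<lambda>p. - f p) = Psi G phi (\<lambda>p. f p + - f p)"
    using Psi_add[OF assms(1) fsums_neg[OF assms(1)] assms(2)] by simp
  also have "\<dots> = \<zero>" by (simp add: Psi_zero)
  finally have e: "Psi G phi f \<oplus> Psi G phi (\<lambda>p. - f p) = \<zero>" .
  show ?thesis
    using add.inv_equality[OF _ Psi_closed[OF assms] Psi_closed[OF fsums_neg[OF assms(1)] assms(2)]] e
      Psi_closed[OF assms] Psi_closed[OF fsums_neg[OF assms(1)] assms(2)] a_comm by metis
qed

lemma Psi_single:
  assumes "p \<in> S" "phi \<in> S \<rightarrow> carrier G"
  shows "Psi G phi (fs_single p) = phi p"
proof -
  have "{q. fs_single p q \<noteq> 0} = {p}" by (auto simp: fs_single_def)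
  then show ?thesis using assms by (auto simp: Psi_def fs_single_def add.int_pow_1 Pi_iff)
qed

lemma Psi_diff3:
  assumes "a \<in> S" "b \<in> S" "c \<in> S" "phi \<in> S \<rightarrow> carrier G"
  shows "Psi G phi (\<lambda>p. fs_single a p - fs_single b p - fs_single c p) = phi a \<ominus> phi b \<ominus> phi c"
proof -
  have e: "(\<lambda>p. fs_single a p - fs_single b p - fs_single c p)
      = (\<lambda>p. (\<lambda>p. fs_single a p + (\<lambda>p. - fs_single b p) p) p + (\<lambda>p. - fs_single c p) p)" by auto
  note s = fsums_single[OF assms(1)] fsums_single[OF assms(2)] fsums_single[OF assms(3)]
  show ?thesis unfolding e
    apply (subst Psi_add[OF fsums_add[OF s(1) fsums_neg[OF s(2)]] fsums_neg[OF s(3)] assms(4)])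
    apply (subst Psi_add[OF s(1) fsums_neg[OF s(2)] assms(4)])
    using assms by (simp add: Psi_neg[OF _ assms(4)] s Psi_single a_minus_def)
qed

lemma Psi_diff2:
  assumes "a \<in> S" "b \<in> S" "phi \<in> S \<rightarrow> carrier G"
  shows "Psi G phi (\<lambda>p. fs_single a p - fs_single b p) = phi a \<ominus> phi b"
proof -
  have e: "(\<lambda>p. fs_single a p - fs_single b p)
      = (\<lambda>p. fs_single a p + (\<lambda>p. - fs_single b p) p)" by auto
  note s = fsums_single[OF assms(1)] fsums_single[OF assms(2)]
  show ?thesis unfolding e
    apply (subst Psi_add[OF s(1) fsums_neg[OF s(2)] assms(3)])
    using assms by (simp add: Psi_neg[OF _ assms(3)] s Psi_single a_minus_def)
qed

lemma Psi_vanish: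
  assumes h: "h \<in> tens_rel R M addM actM N addN actN"
    and cM: "\<And>m m'. m \<in> M \<Longrightarrow> m' \<in> M \<Longrightarrow> addM m m' \<in> M"
    and cN: "\<And>n n'. n \<in> N \<Longrightarrow> n' \<in> N \<Longrightarrow> addN n n' \<in> N"
    and aM: "\<And>m r. m \<in> M \<Longrightarrow> r \<in> R \<Longrightarrow> actM m r \<in> M"
    and aN: "\<And>n r. n \<in> N \<Longrightarrow> r \<in> R \<Longrightarrow> actN r n \<in> N"
    and ph: "phi \<in> M \<times> N \<rightarrow> carrier G"
    and l1: "\<And>m m' n. m \<in> M \<Longrightarrow> m' \<in> M \<Longrightarrow> n \<in> N \<Longrightarrow> phi (addM m m', n) = phi (m, n) \<oplus> phi (m', n)"
    and l2: "\<And>m n n'. m \<in> M \<Longrightarrow> n \<in> N \<Longrightarrow> n' \<in> N \<Longrightarrow> phi (m, addN n n') = phi (m, n) \<oplus> phi (m, n')"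
    and l3: "\<And>m r n. m \<in> M \<Longrightarrow> r \<in> R \<Longrightarrow> n \<in> N \<Longrightarrow> phi (actM m r, n) = phi (m, actN r n)"
  shows "Psi G phi h = \<zero>"
  using h
proof (induction rule: tens_rel.induct)
  case zero then show ?case by (rule Psi_zero)
next
  case (add f h)
  have "f \<in> fsums (M \<times> N)" "h \<in> fsums (M \<times> N)"
    using add.hyps tens_rel_fsums cM cN aM aN by blast+
  then show ?case using add.IH Psi_add[OF _ _ ph] by simp
next
  case (neg f)
  have "f \<in> fsums (M \<times> N)" using neg.hyps tens_rel_fsums cM cN aM aN by blast
  then show ?case using neg.IH Psi_neg[OF _ ph] by simp
next
  case (addl m m' n)
  have c: "phi (m, n) \<in> carrier G" "phi (m', n) \<in> carrier G" using ph addl by auto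
  show ?case
    apply (subst Psi_diff3[OF _ _ _ ph]) using addl cM c
    by (simp_all add: l1[OF addl.hyps] ab3)
next
  case (addr m n n')
  have c: "phi (m, n) \<in> carrier G" "phi (m, n') \<in> carrier G" using ph addr by auto
  show ?case
    apply (subst Psi_diff3[OF _ _ _ ph]) using addr cN c
    by (simp_all add: l2[OF addr.hyps] ab3)
next
  case (bal m r n)
  have c: "phi (m, actN r n) \<in> carrier G" using ph bal aN by auto
  show ?case
    apply (subst Psi_diff2[OF _ _ ph]) using bal aM aN c
    by (simp_all add: l3[OF bal.hyps] r_neg a_minus_def)
qed

end

context ring
begin

lemma rc_mem: "z \<in> L +> x \<longleftrightarrow> (\<exists>h\<in>L. z = h \<oplus> x)"
  by (auto simp: a_r_coset_def')

lemma sa_mem: "z \<in> L <+>\<^bsub>R\<^esub> L' \<longleftrightarrow> (\<exists>h\<in>L. \<exists>h'\<in>L'. z = h \<oplus> h')"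
  by (auto simp: set_add_def')

lemma rc_eq:
  assumes L: "ideal L R" and x: "x \<in> carrier R" and y: "y \<in> carrier R"
  shows "L +> x = L +> y \<longleftrightarrow> x \<ominus> y \<in> L"
proof
  interpret ideal L R by fact
  assume e: "L +> x = L +> y"
  have "x \<in> L +> x" using x by (simp add: a_rcos_self)
  then obtain h where h: "h \<in> L" "x = h \<oplus> y" using e rc_mem by auto
  have "x \<ominus> y = h" using h x y Icarr[OF h(1)] by (simp add: a_minus_def a_assoc r_neg)
  then show "x \<ominus> y \<in> L" using h by simp
next
  interpret ideal L R by fact
  assume d: "x \<ominus> y \<in> L"
  have hc: "x \<ominus> y \<in> carrier R" using x y by simp
  have "x = (x \<ominus> y) \<oplus> y" using x y by (simp add: a_minus_def a_assoc l_neg)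
  then have "x \<in> L +> y" using d rc_mem by blast
  then show "L +> x = L +> y"
    using a_repr_independence' x y by (metis a_repr_independence is_additive_subgroup
        additive_subgroup.a_subgroup)
qed

lemma rc_eqI:
  assumes "ideal L R" "x \<in> carrier R" "y \<in> carrier R" "x \<ominus> y \<in> L"
  shows "L +> x = L +> y"
  using rc_eq assms by blast

lemma rc_zero: "ideal L R \<Longrightarrow> L +> \<zero> = L"
  by (simp add: additive_subgroup.a_subset ideal.axioms(1))

lemma rc_zero_iff: "ideal L R \<Longrightarrow> x \<in> carrier R \<Longrightarrow> L +> x = L \<longleftrightarrow> x \<in> L"
  using rc_eq[of L x \<zero>] by (simp add: rc_zero a_minus_def)

lemma sa_ideal_left: "ideal L R \<Longrightarrow> ideal L' R \<Longrightarrow> L \<subseteq> L <+>\<^bsub>R\<^esub> L'"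
proof
  fix x assume "ideal L R" "ideal L' R" "x \<in> L"
  then have "x = x \<oplus> \<zero>" "\<zero> \<in> L'" "x \<in> carrier R"
    by (auto simp: additive_subgroup.zero_closed ideal.axioms(1) ideal.Icarr)
  then show "x \<in> L <+>\<^bsub>R\<^esub> L'" using \<open>x \<in> L\<close> sa_mem by blast
qed

lemma sa_comm: "L \<subseteq> carrier R \<Longrightarrow> L' \<subseteq> carrier R \<Longrightarrow> L <+>\<^bsub>R\<^esub> L' = L' <+>\<^bsub>R\<^esub> L"
  by (auto simp: sa_mem) (metis a_comm subsetD)+

lemma sa_ideal_right: "ideal L R \<Longrightarrow> ideal L' R \<Longrightarrow> L' \<subseteq> L <+>\<^bsub>R\<^esub> L'"
  using sa_ideal_left sa_comm by (metis additive_subgroup.a_subset ideal.axioms(1))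

lemma sa_self: "ideal L R \<Longrightarrow> L <+>\<^bsub>R\<^esub> L = L"
  by (simp add: additive_subgroup.a_subgroup ideal.axioms(1) subgroup_add_id)

lemma sa_rc_absorb:
  assumes L: "ideal L R" and L': "ideal L' R" and sub: "L' \<subseteq> L" and x: "x \<in> carrier R"
  shows "L <+>\<^bsub>R\<^esub> (L' +> x) = L +> x"
proof
  interpret L: ideal L R by fact
  interpret L': ideal L' R by fact
  show "L <+>\<^bsub>R\<^esub> (L' +> x) \<subseteq> L +> x"
  proof
    fix z assume "z \<in> L <+>\<^bsub>R\<^esub> (L' +> x)"
    then obtain h h' where h: "h \<in> L" "h' \<in> L'" "z = h \<oplus> (h' \<oplus> x)"
      by (auto simp: sa_mem rc_mem)
    then have "z = (h \<oplus> h') \<oplus> x" "h \<oplus> h' \<in> L"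
      using x sub L.a_subset L'.a_subset by (auto simp: a_assoc)
    then show "z \<in> L +> x" by (auto simp: rc_mem)
  qed
next
  interpret L: ideal L R by fact
  interpret L': ideal L' R by fact
  show "L +> x \<subseteq> L <+>\<^bsub>R\<^esub> (L' +> x)"
  proof
    fix z assume "z \<in> L +> x"
    then obtain h where h: "h \<in> L" "z = h \<oplus> x" by (auto simp: rc_mem)
    then have "z = h \<oplus> (\<zero> \<oplus> x)" using x by simp
    moreover have "\<zero> \<oplus> x \<in> L' +> x" using rc_mem L'.zero_closed by blast
    ultimately show "z \<in> L <+>\<^bsub>R\<^esub> (L' +> x)" using h sa_mem by blast
  qed
qed

lemma quot_carrier: "carrier (R Quot L) = {L +> x | x. x \<in> carrier R}"
  by (auto simp: FactRing_def A_RCOSETS_def')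

lemma quot_add: "ideal L R \<Longrightarrow> x \<in> carrier R \<Longrightarrow> y \<in> carrier R \<Longrightarrow>
    (L +> x) \<oplus>\<^bsub>R Quot L\<^esub> (L +> y) = L +> (x \<oplus> y)"
  by (simp add: FactRing_def ideal.a_rcos_sum ideal.axioms)

lemma quot_mult: "ideal L R \<Longrightarrow> x \<in> carrier R \<Longrightarrow> y \<in> carrier R \<Longrightarrow>
    (L +> x) \<otimes>\<^bsub>R Quot L\<^esub> (L +> y) = L +> (x \<otimes> y)"
  by (simp add: FactRing_def ideal.rcoset_mult_add)

lemma quot_zero: "ideal L R \<Longrightarrow> \<zero>\<^bsub>R Quot L\<^esub> = L +> \<zero>"
  by (simp add: FactRing_def rc_zero)

lemma quot_one: "\<one>\<^bsub>R Quot L\<^esub> = L +> \<one>"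
  by (simp add: FactRing_def)

end

locale covl = ring B for B :: "('b,'c) ring_scheme" (structure) +
  fixes J :: "'i \<Rightarrow> 'b set" and I :: "'i set"
  assumes finI: "finite I" and idl: "\<And>i. i \<in> I \<Longrightarrow> ideal (J i) B"
begin

abbreviation "A \<equiv> cov_A B J I"
abbreviation "C \<equiv> cov_C B J I"
abbreviation "Jp i j \<equiv> J i <+>\<^bsub>B\<^esub> J j"

definition mkA :: "('i \<Rightarrow> 'b) \<Rightarrow> ('i \<Rightarrow> 'b set)" where
  "mkA F = (\<lambda>k\<in>I. J k +> F k)"

definition mkC :: "('i \<Rightarrow> 'i \<Rightarrow> 'b) \<Rightarrow> ('i \<times> 'i \<Rightarrow> 'b set)" where
  "mkC F = (\<lambda>p\<in>I \<times> I. Jp (fst p) (snd p) +> F (fst p) (snd p))"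

definition rA :: "'i \<Rightarrow> ('i \<Rightarrow> 'b set) \<Rightarrow> 'b" where
  "rA k a = (SOME x. x \<in> carrier B \<and> a k = J k +> x)"

definition rC :: "'i \<Rightarrow> 'i \<Rightarrow> ('i \<times> 'i \<Rightarrow> 'b set) \<Rightarrow> 'b" where
  "rC i j c = (SOME x. x \<in> carrier B \<and> c (i, j) = Jp i j +> x)"

lemma idlp: "i \<in> I \<Longrightarrow> j \<in> I \<Longrightarrow> ideal (Jp i j) B"
  by (simp add: add_ideals idl)

lemma Jsub: "i \<in> I \<Longrightarrow> J i \<subseteq> carrier B"
  by (simp add: additive_subgroup.a_subset ideal.axioms(1) idl)

lemma Jl: "i \<in> I \<Longrightarrow> j \<in> I \<Longrightarrow> J i \<subseteq> Jp i j"
  by (simp add: idl sa_ideal_left)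

lemma Jr: "i \<in> I \<Longrightarrow> j \<in> I \<Longrightarrow> J j \<subseteq> Jp i j"
  by (simp add: idl sa_ideal_right)

lemma Jp_comm: "i \<in> I \<Longrightarrow> j \<in> I \<Longrightarrow> Jp i j = Jp j i"
  by (simp add: Jsub sa_comm)

lemma Jp_self: "i \<in> I \<Longrightarrow> Jp i i = J i"
  by (simp add: idl sa_self)

lemma A_carrier: "carrier A = (\<Pi>\<^sub>E k\<in>I. carrier (B Quot J k))"
  by (simp add: cov_A_def)

lemma C_carrier: "carrier C = (\<Pi>\<^sub>E p\<in>I \<times> I. carrier (B Quot Jp (fst p) (snd p)))"
  by (simp add: cov_C_def)

lemma A_add: "a \<oplus>\<^bsub>A\<^esub> a' = (\<lambda>i\<in>I. a i \<oplus>\<^bsub>B Quot J i\<^esub> a' i)"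
  by (simp add: cov_A_def)

lemma A_mult: "a \<otimes>\<^bsub>A\<^esub> a' = (\<lambda>i\<in>I. a i \<otimes>\<^bsub>B Quot J i\<^esub> a' i)"
  by (simp add: cov_A_def)

lemma C_add: "c \<oplus>\<^bsub>C\<^esub> c' = (\<lambda>p\<in>I \<times> I. c p \<oplus>\<^bsub>B Quot Jp (fst p) (snd p)\<^esub> c' p)"
  by (simp add: cov_C_def)

lemma mkA_in: "(\<And>k. k \<in> I \<Longrightarrow> F k \<in> carrier B) \<Longrightarrow> mkA F \<in> carrier A"
  by (auto simp: A_carrier mkA_def quot_carrier)

lemma mkC_in: "(\<And>i j. i \<in> I \<Longrightarrow> j \<in> I \<Longrightarrow> F i j \<in> carrier B) \<Longrightarrow> mkC F \<in> carrier C"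
  by (auto simp: C_carrier mkC_def quot_carrier)

lemma rA:
  assumes "a \<in> carrier A" "k \<in> I"
  shows "rA k a \<in> carrier B" "a k = J k +> rA k a"
proof -
  have "\<exists>x. x \<in> carrier B \<and> a k = J k +> x"
    using assms by (auto simp: A_carrier quot_carrier)
  then show "rA k a \<in> carrier B" "a k = J k +> rA k a"
    unfolding rA_def by (metis (mono_tags, lifting) someI_ex)+
qed

lemma rC:
  assumes "c \<in> carrier C" "i \<in> I" "j \<in> I"
  shows "rC i j c \<in> carrier B" "c (i, j) = Jp i j +> rC i j c"
proof -
  have "c (i, j) \<in> carrier (B Quot Jp i j)"
    using PiE_mem[OF assms(1)[unfolded C_carrier], of "(i, j)"] assms by simp
  then have "\<exists>x. x \<in> carrier B \<and> c (i, j) = Jp i j +> x"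
    by (auto simp: quot_carrier)
  then show "rC i j c \<in> carrier B" "c (i, j) = Jp i j +> rC i j c"
    unfolding rC_def by (metis (mono_tags, lifting) someI_ex)+
qed

lemma A_rep: "a \<in> carrier A \<Longrightarrow> a = mkA (\<lambda>k. rA k a)"
  using rA by (auto simp: mkA_def A_carrier PiE_def extensional_def fun_eq_iff)

lemma C_rep: "c \<in> carrier C \<Longrightarrow> c = mkC (\<lambda>i j. rC i j c)"
  using rC by (auto simp: mkC_def C_carrier PiE_def extensional_def fun_eq_iff)

lemma mkA_cong: "(\<And>k. k \<in> I \<Longrightarrow> F k = G k) \<Longrightarrow> mkA F = mkA G"
  unfolding mkA_def by (intro restrict_ext) simp

lemma mkC_cong: "(\<And>i j. i \<in> I \<Longrightarrow> j \<in> I \<Longrightarrow> F i j = G i j) \<Longrightarrow> mkC F = mkC G"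
  unfolding mkC_def by (intro restrict_ext) auto

lemma mkA_eq:
  assumes "\<And>k. k \<in> I \<Longrightarrow> F k \<in> carrier B" "\<And>k. k \<in> I \<Longrightarrow> G k \<in> carrier B"
    "\<And>k. k \<in> I \<Longrightarrow> F k \<ominus> G k \<in> J k"
  shows "mkA F = mkA G"
  unfolding mkA_def by (intro restrict_ext) (simp add: assms rc_eqI idl)

lemma mkC_eq:
  assumes "\<And>i j. i \<in> I \<Longrightarrow> j \<in> I \<Longrightarrow> F i j \<in> carrier B"
    "\<And>i j. i \<in> I \<Longrightarrow> j \<in> I \<Longrightarrow> G i j \<in> carrier B"
    "\<And>i j. i \<in> I \<Longrightarrow> j \<in> I \<Longrightarrow> F i j \<ominus> G i j \<in> Jp i j"
  shows "mkC F = mkC G"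
  unfolding mkC_def
proof (intro restrict_ext)
  fix p assume "p \<in> I \<times> I"
  then show "Jp (fst p) (snd p) +> F (fst p) (snd p) = Jp (fst p) (snd p) +> G (fst p) (snd p)"
    by (intro rc_eqI) (auto simp: assms idlp)
qed

lemma mkA_eq_iff:
  assumes F: "\<And>k. k \<in> I \<Longrightarrow> F k \<in> carrier B" and G: "\<And>k. k \<in> I \<Longrightarrow> G k \<in> carrier B"
  shows "mkA F = mkA G \<longleftrightarrow> (\<forall>k\<in>I. F k \<ominus> G k \<in> J k)"
proof
  assume e: "mkA F = mkA G"
  show "\<forall>k\<in>I. F k \<ominus> G k \<in> J k"
  proof
    fix k assume k: "k \<in> I"
    have "J k +> F k = J k +> G k" using fun_cong[OF e, of k] k by (simp add: mkA_def)
    then show "F k \<ominus> G k \<in> J k" using rc_eq[OF idl[OF k] F[OF k] G[OF k]] by simp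
  qed
next
  assume "\<forall>k\<in>I. F k \<ominus> G k \<in> J k"
  then show "mkA F = mkA G" using mkA_eq[of F G] F G by blast
qed

lemma mkC_eq_iff:
  assumes F: "\<And>i j. i \<in> I \<Longrightarrow> j \<in> I \<Longrightarrow> F i j \<in> carrier B"
    and G: "\<And>i j. i \<in> I \<Longrightarrow> j \<in> I \<Longrightarrow> G i j \<in> carrier B"
  shows "mkC F = mkC G \<longleftrightarrow> (\<forall>i\<in>I. \<forall>j\<in>I. F i j \<ominus> G i j \<in> Jp i j)"
proof
  assume e: "mkC F = mkC G"
  show "\<forall>i\<in>I. \<forall>j\<in>I. F i j \<ominus> G i j \<in> Jp i j"
  proof (intro ballI)
    fix i j assume i: "i \<in> I" and j: "j \<in> I"
    have "Jp i j +> F i j = Jp i j +> G i j"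
      using fun_cong[OF e, of "(i, j)"] i j unfolding mkC_def by simp
    then show "F i j \<ominus> G i j \<in> Jp i j" using rc_eq[OF idlp[OF i j] F[OF i j] G[OF i j]] by simp
  qed
next
  assume "\<forall>i\<in>I. \<forall>j\<in>I. F i j \<ominus> G i j \<in> Jp i j"
  then show "mkC F = mkC G" using mkC_eq[of F G] F G by blast
qed

lemma mkA_add:
  assumes "\<And>k. k \<in> I \<Longrightarrow> F k \<in> carrier B" "\<And>k. k \<in> I \<Longrightarrow> G k \<in> carrier B"
  shows "mkA F \<oplus>\<^bsub>A\<^esub> mkA G = mkA (\<lambda>k. F k \<oplus> G k)"
  unfolding mkA_def A_add by (intro restrict_ext) (simp add: assms idl quot_add)

lemma mkA_mult:
  assumes "\<And>k. k \<in> I \<Longrightarrow> F k \<in> carrier B" "\<And>k. k \<in> I \<Longrightarrow> G k \<in> carrier B"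
  shows "mkA F \<otimes>\<^bsub>A\<^esub> mkA G = mkA (\<lambda>k. F k \<otimes> G k)"
  unfolding mkA_def A_mult by (intro restrict_ext) (simp add: assms idl quot_mult)

lemma mkC_add:
  assumes "\<And>i j. i \<in> I \<Longrightarrow> j \<in> I \<Longrightarrow> F i j \<in> carrier B"
    "\<And>i j. i \<in> I \<Longrightarrow> j \<in> I \<Longrightarrow> G i j \<in> carrier B"
  shows "mkC F \<oplus>\<^bsub>C\<^esub> mkC G = mkC (\<lambda>i j. F i j \<oplus> G i j)"
  unfolding mkC_def C_add
proof (intro restrict_ext)
  fix p assume "p \<in> I \<times> I"
  then show "(\<lambda>p\<in>I \<times> I. Jp (fst p) (snd p) +> F (fst p) (snd p)) p \<oplus>\<^bsub>B Quot Jp (fst p) (snd p)\<^esub>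
          (\<lambda>p\<in>I \<times> I. Jp (fst p) (snd p) +> G (fst p) (snd p)) p =
          Jp (fst p) (snd p) +> F (fst p) (snd p) \<oplus> G (fst p) (snd p)"
    by (auto simp: assms idlp quot_add)
qed

lemma zero_A: "\<zero>\<^bsub>A\<^esub> = mkA (\<lambda>_. \<zero>)"
  unfolding mkA_def by (simp add: cov_A_def) (intro restrict_ext, simp add: idl quot_zero)

lemma one_A: "\<one>\<^bsub>A\<^esub> = mkA (\<lambda>_. \<one>)"
  unfolding mkA_def by (simp add: cov_A_def) (intro restrict_ext, simp add: idl quot_one)

lemma zero_C: "\<zero>\<^bsub>C\<^esub> = mkC (\<lambda>_ _. \<zero>)"
  unfolding mkC_def
proof (simp add: cov_C_def, intro restrict_ext)
  fix p assume "p \<in> I \<times> I"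
  then show "\<zero>\<^bsub>B Quot Jp (fst p) (snd p)\<^esub> = Jp (fst p) (snd p) +> \<zero>"
    by (auto simp: idlp quot_zero)
qed

lemma iota_mk: "cov_iota B J I x = mkA (\<lambda>_. x)"
  by (simp add: cov_iota_def cov_pi_def mkA_def)

lemma pit: "i \<in> I \<Longrightarrow> j \<in> I \<Longrightarrow> x \<in> carrier B \<Longrightarrow> cov_pit B J i j (J i +> x) = Jp i j +> x"
  unfolding cov_pit_def by (rule sa_rc_absorb) (auto simp: idlp idl Jl)

lemma pit': "i \<in> I \<Longrightarrow> j \<in> I \<Longrightarrow> x \<in> carrier B \<Longrightarrow> cov_pit B J j i (J j +> x) = Jp i j +> x"
  using pit Jp_comm by simp

lemma lact_mk:
  assumes "\<And>k. k \<in> I \<Longrightarrow> F k \<in> carrier B"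
    "\<And>i j. i \<in> I \<Longrightarrow> j \<in> I \<Longrightarrow> G i j \<in> carrier B"
  shows "cov_lact B J I (mkA F) (mkC G) = mkC (\<lambda>i j. F i \<otimes> G i j)"
  unfolding cov_lact_def mkC_def
  by (rule ext) (auto simp: assms mkA_def pit quot_mult idlp)

lemma ract_mk:
  assumes "\<And>k. k \<in> I \<Longrightarrow> F k \<in> carrier B"
    "\<And>i j. i \<in> I \<Longrightarrow> j \<in> I \<Longrightarrow> G i j \<in> carrier B"
  shows "cov_ract B J I (mkC G) (mkA F) = mkC (\<lambda>i j. G i j \<otimes> F j)"
  unfolding cov_ract_def mkC_def
  by (rule ext) (auto simp: assms mkA_def pit' quot_mult idlp)

lemma g_mk: "cov_g B J I = mkC (\<lambda>_ _. \<one>)"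
  unfolding cov_g_def mkC_def cov_pij_def by (rule ext) auto

end

locale tr =
  fixes R :: "'r set" and M :: "'m set" and addM :: "'m \<Rightarrow> 'm \<Rightarrow> 'm" and actM :: "'m \<Rightarrow> 'r \<Rightarrow> 'm"
    and N :: "'n set" and addN :: "'n \<Rightarrow> 'n \<Rightarrow> 'n" and actN :: "'r \<Rightarrow> 'n \<Rightarrow> 'n"
begin

abbreviation "T \<equiv> tens_rel R M addM actM N addN actN"

definition teq :: "('m \<times> 'n \<Rightarrow> int) \<Rightarrow> ('m \<times> 'n \<Rightarrow> int) \<Rightarrow> bool" where
  "teq f h \<longleftrightarrow> (\<lambda>p. f p - h p) \<in> T"

lemma T_add: "f \<in> T \<Longrightarrow> h \<in> T \<Longrightarrow> (\<lambda>p. f p + h p) \<in> T"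
  by (rule tens_rel.add)

lemma T_neg: "f \<in> T \<Longrightarrow> (\<lambda>p. - f p) \<in> T"
  by (rule tens_rel.neg)

lemma T_diff: "f \<in> T \<Longrightarrow> h \<in> T \<Longrightarrow> (\<lambda>p. f p - h p) \<in> T"
proof -
  assume "f \<in> T" "h \<in> T"
  then have "(\<lambda>p. f p + (\<lambda>p. - h p) p) \<in> T" by (intro T_add T_neg)
  then show ?thesis by simp
qed

lemma T_eq: "f \<in> T \<Longrightarrow> f = h \<Longrightarrow> h \<in> T" by simp

lemma teq_T: "teq f (\<lambda>_. 0) \<longleftrightarrow> f \<in> T"
  by (simp add: teq_def)

lemma teq_refl: "teq f f"
  by (simp add: teq_def tens_rel.zero)

lemma teq_eq: "f = h \<Longrightarrow> teq f h"
  by (simp add: teq_refl)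

lemma teq_sym: "teq f h \<Longrightarrow> teq h f"
proof -
  assume "teq f h"
  then have "(\<lambda>p. - (f p - h p)) \<in> T" unfolding teq_def by (rule T_neg)
  then show ?thesis unfolding teq_def by simp
qed

lemma teq_trans [trans]: "teq f h \<Longrightarrow> teq h k \<Longrightarrow> teq f k"
proof -
  assume "teq f h" "teq h k"
  then have "(\<lambda>p. (f p - h p) + (h p - k p)) \<in> T" unfolding teq_def by (rule T_add)
  then show ?thesis unfolding teq_def by simp
qed

lemma teq_add: "teq f1 h1 \<Longrightarrow> teq f2 h2 \<Longrightarrow> teq (\<lambda>p. f1 p + f2 p) (\<lambda>p. h1 p + h2 p)"
proof -
  assume "teq f1 h1" "teq f2 h2"
  then have "(\<lambda>p. (f1 p - h1 p) + (f2 p - h2 p)) \<in> T" unfolding teq_def by (rule T_add)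
  then show ?thesis unfolding teq_def by (simp add: algebra_simps)
qed

lemma teq_diff: "teq f1 h1 \<Longrightarrow> teq f2 h2 \<Longrightarrow> teq (\<lambda>p. f1 p - f2 p) (\<lambda>p. h1 p - h2 p)"
proof -
  assume "teq f1 h1" "teq f2 h2"
  then have "(\<lambda>p. (f1 p - h1 p) - (f2 p - h2 p)) \<in> T" unfolding teq_def by (rule T_diff)
  then show ?thesis unfolding teq_def by (simp add: algebra_simps)
qed

lemma teq_sum: "finite D \<Longrightarrow> (\<And>d. d \<in> D \<Longrightarrow> teq (F d) (G d)) \<Longrightarrow>
    teq (\<lambda>p. \<Sum>d\<in>D. F d p) (\<lambda>p. \<Sum>d\<in>D. G d p)"
proof (induction D rule: finite_induct)
  case empty then show ?case by (simp add: teq_refl)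
next
  case (insert x D')
  have "teq (\<lambda>p. F x p + (\<Sum>d\<in>D'. F d p)) (\<lambda>p. G x p + (\<Sum>d\<in>D'. G d p))"
    using insert by (intro teq_add) auto
  then show ?case using insert by simp
qed

lemma T_sum: "finite D \<Longrightarrow> (\<And>d. d \<in> D \<Longrightarrow> F d \<in> T) \<Longrightarrow> (\<lambda>p. \<Sum>d\<in>D. F d p) \<in> T"
  using teq_sum[of D F "\<lambda>_ _. 0"] by (simp add: teq_T)

lemma teq_zero_right: "teq f (\<lambda>_. 0) \<Longrightarrow> teq h (\<lambda>p. h p + f p)"
proof -
  assume "teq f (\<lambda>_. 0)"
  then have "teq (\<lambda>p. h p + 0) (\<lambda>p. h p + f p)" using teq_add[OF teq_refl teq_sym] by blast
  then show ?thesis by simp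
qed

lemma teq_T_left: "teq f h \<Longrightarrow> h \<in> T \<Longrightarrow> f \<in> T"
proof -
  assume "teq f h" "h \<in> T"
  then have "(\<lambda>p. (f p - h p) + h p) \<in> T" unfolding teq_def by (rule T_add)
  then show ?thesis by simp
qed

lemma teq_T_right: "teq f h \<Longrightarrow> f \<in> T \<Longrightarrow> h \<in> T"
  using teq_T_left teq_sym by blast

lemma teq_bal: "m \<in> M \<Longrightarrow> r \<in> R \<Longrightarrow> n \<in> N \<Longrightarrow> teq (fs_single (actM m r, n)) (fs_single (m, actN r n))"
  unfolding teq_def by (rule tens_rel.bal)

lemma teq_addl: "m \<in> M \<Longrightarrow> m' \<in> M \<Longrightarrow> n \<in> N \<Longrightarrow>
    teq (fs_single (addM m m', n)) (\<lambda>p. fs_single (m, n) p + fs_single (m', n) p)"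
proof -
  assume a: "m \<in> M" "m' \<in> M" "n \<in> N"
  have "(\<lambda>p. fs_single (addM m m', n) p - fs_single (m, n) p - fs_single (m', n) p) \<in> T"
    using a by (rule tens_rel.addl)
  then show ?thesis unfolding teq_def by (simp add: algebra_simps)
qed

lemma teq_addr: "m \<in> M \<Longrightarrow> n \<in> N \<Longrightarrow> n' \<in> N \<Longrightarrow>
    teq (fs_single (m, addN n n')) (\<lambda>p. fs_single (m, n) p + fs_single (m, n') p)"
proof -
  assume a: "m \<in> M" "n \<in> N" "n' \<in> N"
  have "(\<lambda>p. fs_single (m, addN n n') p - fs_single (m, n) p - fs_single (m, n') p) \<in> T"
    using a by (rule tens_rel.addr)
  then show ?thesis unfolding teq_def by (simp add: algebra_simps)
qed

lemma T_zero_left: "m0 \<in> M \<Longrightarrow> addM m0 m0 = m0 \<Longrightarrow> n \<in> N \<Longrightarrow> fs_single (m0, n) \<in> T"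
proof -
  assume a: "m0 \<in> M" "addM m0 m0 = m0" "n \<in> N"
  have "(\<lambda>p. fs_single (addM m0 m0, n) p - fs_single (m0, n) p - fs_single (m0, n) p) \<in> T"
    using a by (intro tens_rel.addl) auto
  then have "(\<lambda>p. - fs_single (m0, n) p) \<in> T" using a by simp
  then have "(\<lambda>p. - (- fs_single (m0, n) p)) \<in> T" by (rule T_neg)
  then show ?thesis by simp
qed

lemma T_zero_right: "n0 \<in> N \<Longrightarrow> addN n0 n0 = n0 \<Longrightarrow> m \<in> M \<Longrightarrow> fs_single (m, n0) \<in> T"
proof -
  assume a: "n0 \<in> N" "addN n0 n0 = n0" "m \<in> M"
  have "(\<lambda>p. fs_single (m, addN n0 n0) p - fs_single (m, n0) p - fs_single (m, n0) p) \<in> T"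
    using a by (intro tens_rel.addr) auto
  then have "(\<lambda>p. - fs_single (m, n0) p) \<in> T" using a by simp
  then have "(\<lambda>p. - (- fs_single (m, n0) p)) \<in> T" by (rule T_neg)
  then show ?thesis by simp
qed

lemma decomp_left:
  assumes fin: "finite S"
    and Fe: "fs_single (F {}, n) \<in> T" and n: "n \<in> N"
    and Fin: "\<And>S'. S' \<subseteq> S \<Longrightarrow> F S' \<in> M"
    and u: "\<And>i. i \<in> S \<Longrightarrow> u i \<in> M"
    and Fins: "\<And>S' i. S' \<subseteq> S \<Longrightarrow> i \<in> S \<Longrightarrow> i \<notin> S' \<Longrightarrow> F (insert i S') = addM (F S') (u i)"
  shows "teq (fs_single (F S, n)) (\<lambda>p. \<Sum>i\<in>S. fs_single (u i, n) p)"
proof -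
  have "\<And>S'. S' \<subseteq> S \<Longrightarrow> teq (fs_single (F S', n)) (\<lambda>p. \<Sum>i\<in>S'. fs_single (u i, n) p)"
  proof -
    fix S' assume "S' \<subseteq> S"
    then have "finite S'" using fin finite_subset by blast
    then show "S' \<subseteq> S \<Longrightarrow> teq (fs_single (F S', n)) (\<lambda>p. \<Sum>i\<in>S'. fs_single (u i, n) p)"
    proof (induction S' rule: finite_induct)
      case empty then show ?case using Fe by (simp add: teq_T)
    next
      case (insert i S'')
      have "teq (fs_single (F (insert i S''), n)) (\<lambda>p. fs_single (F S'', n) p + fs_single (u i, n) p)"
        using insert Fins[of S'' i] Fin[of S''] u[of i] n by (simp add: teq_addl)
      also have "teq \<dots> (\<lambda>p. (\<Sum>i\<in>S''. fs_single (u i, n) p) + fs_single (u i, n) p)"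
        using insert by (intro teq_add teq_refl) auto
      finally show ?case using insert by (simp add: add.commute)
    qed
  qed
  then show ?thesis by simp
qed

lemma decomp_right:
  assumes fin: "finite S"
    and Fe: "fs_single (m, F {}) \<in> T" and m: "m \<in> M"
    and Fin: "\<And>S'. S' \<subseteq> S \<Longrightarrow> F S' \<in> N"
    and u: "\<And>i. i \<in> S \<Longrightarrow> u i \<in> N"
    and Fins: "\<And>S' i. S' \<subseteq> S \<Longrightarrow> i \<in> S \<Longrightarrow> i \<notin> S' \<Longrightarrow> F (insert i S') = addN (F S') (u i)"
  shows "teq (fs_single (m, F S)) (\<lambda>p. \<Sum>i\<in>S. fs_single (m, u i) p)"
proof -
  have "\<And>S'. S' \<subseteq> S \<Longrightarrow> teq (fs_single (m, F S')) (\<lambda>p. \<Sum>i\<in>S'. fs_single (m, u i) p)"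
  proof -
    fix S' assume "S' \<subseteq> S"
    then have "finite S'" using fin finite_subset by blast
    then show "S' \<subseteq> S \<Longrightarrow> teq (fs_single (m, F S')) (\<lambda>p. \<Sum>i\<in>S'. fs_single (m, u i) p)"
    proof (induction S' rule: finite_induct)
      case empty then show ?case using Fe by (simp add: teq_T)
    next
      case (insert i S'')
      have "teq (fs_single (m, F (insert i S''))) (\<lambda>p. fs_single (m, F S'') p + fs_single (m, u i) p)"
        using insert Fins[of S'' i] Fin[of S''] u[of i] m by (simp add: teq_addr)
      also have "teq \<dots> (\<lambda>p. (\<Sum>i\<in>S''. fs_single (m, u i) p) + fs_single (m, u i) p)"
        using insert by (intro teq_add teq_refl) auto
      finally show ?case using insert by (simp add: add.commute)
    qed
  qed
  then show ?thesis by simp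
qed

end

lemma fsums_add_smult: "f0 \<in> fsums S \<Longrightarrow> x \<in> S \<Longrightarrow> (\<lambda>q. f0 q + i * fs_single x q) \<in> fsums S"
proof -
  assume a: "f0 \<in> fsums S" "x \<in> S"
  have sub: "{q. f0 q + i * fs_single x q \<noteq> 0} \<subseteq> {p. f0 p \<noteq> 0} \<union> {x}"
    by (auto simp: fs_single_def)
  have "finite ({p. f0 p \<noteq> 0} \<union> {x})" "{p. f0 p \<noteq> 0} \<union> {x} \<subseteq> S"
    using a by (auto simp: fsums_def)
  then show ?thesis using sub unfolding fsums_iff by (meson finite_subset order_trans)
qed

lemma fsums_induct:
  assumes f: "f \<in> fsums S"
    and P0: "P (\<lambda>_. 0)"
    and Pp: "\<And>f p. f \<in> fsums S \<Longrightarrow> p \<in> S \<Longrightarrow> P f \<Longrightarrow> P (\<lambda>q. f q + fs_single p q)"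
    and Pm: "\<And>f p. f \<in> fsums S \<Longrightarrow> p \<in> S \<Longrightarrow> P f \<Longrightarrow> P (\<lambda>q. f q - fs_single p q)"
  shows "P f"
proof -
  have main: "\<forall>f. {p. f p \<noteq> 0} \<subseteq> D \<longrightarrow> f \<in> fsums S \<longrightarrow> P f" if D: "finite D" "D \<subseteq> S" for D
    using D
  proof (induction D rule: finite_induct)
    case empty
    show ?case
    proof (intro allI impI)
      fix f :: "'a \<Rightarrow> int" assume "{p. f p \<noteq> 0} \<subseteq> {}"
      then have "f = (\<lambda>_. 0)" by auto
      then show "P f" using P0 by simp
    qed
  next
    case (insert x D')
    have xS: "x \<in> S" using insert.prems by simp
    have IH: "\<forall>f. {p. f p \<noteq> 0} \<subseteq> D' \<longrightarrow> f \<in> fsums S \<longrightarrow> P f" using insert by simp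
    show ?case
    proof (intro allI impI)
      fix f assume sf: "{p. f p \<noteq> 0} \<subseteq> insert x D'" and fs: "f \<in> fsums S"
      define f0 where "f0 = f(x := 0)"
      have sub0: "{p. f0 p \<noteq> 0} \<subseteq> {p. f p \<noteq> 0}" by (auto simp: f0_def)
      have f0s: "f0 \<in> fsums S" using fs sub0 unfolding fsums_iff by (meson finite_subset order_trans)
      have "{p. f0 p \<noteq> 0} \<subseteq> D'" using sf by (auto simp: f0_def)
      then have P0': "P f0" using IH f0s by blast
      have step: "P (\<lambda>q. f0 q + k * fs_single x q)" for k :: int
      proof (induction k rule: int_induct[where k = 0])
        case base then show ?case using P0' by simp
      next
        case (step1 i)
        have "P (\<lambda>q. (\<lambda>q. f0 q + i * fs_single x q) q + fs_single x q)"
          by (rule Pp[OF fsums_add_smult[OF f0s xS] xS step1.IH])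
        then show ?case by (simp add: algebra_simps)
      next
        case (step2 i)
        have "P (\<lambda>q. (\<lambda>q. f0 q + i * fs_single x q) q - fs_single x q)"
          by (rule Pm[OF fsums_add_smult[OF f0s xS] xS step2.IH])
        then show ?case by (simp add: algebra_simps)
      qed
      have "f = (\<lambda>q. f0 q + f x * fs_single x q)"
        by (auto simp: f0_def fs_single_def fun_eq_iff)
      then show "P f" using step by metis
    qed
  qed
  have "finite {p. f p \<noteq> 0}" "{p. f p \<noteq> 0} \<subseteq> S" using f by (auto simp: fsums_def)
  then show ?thesis using main f by blast
qed

context covl
begin

abbreviation "lact \<equiv> cov_lact B J I"
abbreviation "ract \<equiv> cov_ract B J I"
abbreviation "gg \<equiv> cov_g B J I"

definition phiC :: "('i \<Rightarrow> 'b set) \<times> ('i \<Rightarrow> 'b set) \<Rightarrow> ('i \<times> 'i \<Rightarrow> 'b set)" where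
  "phiC p = lact (fst p) (ract gg (snd p))"

definition e :: "'i \<Rightarrow> 'b \<Rightarrow> ('i \<Rightarrow> 'b set)" where
  "e i x = mkA (\<lambda>k. if k = i then x else \<zero>)"

lemma e_in: "x \<in> carrier B \<Longrightarrow> e i x \<in> carrier A"
  unfolding e_def by (rule mkA_in) auto

lemma g_in: "gg \<in> carrier C"
  unfolding g_mk by (rule mkC_in) auto

lemma ract_g: "(\<And>k. k \<in> I \<Longrightarrow> G k \<in> carrier B) \<Longrightarrow> ract gg (mkA G) = mkC (\<lambda>i j. G j)"
  unfolding g_mk by (subst ract_mk) (auto intro!: mkC_cong)

lemma lact_g: "(\<And>k. k \<in> I \<Longrightarrow> G k \<in> carrier B) \<Longrightarrow> lact (mkA G) gg = mkC (\<lambda>i j. G i)"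
  unfolding g_mk by (subst lact_mk) (auto intro!: mkC_cong)

lemma phi_mk:
  assumes "\<And>k. k \<in> I \<Longrightarrow> F k \<in> carrier B" "\<And>k. k \<in> I \<Longrightarrow> G k \<in> carrier B"
  shows "phiC (mkA F, mkA G) = mkC (\<lambda>i j. F i \<otimes> G j)"
  unfolding phiC_def using assms by (simp add: ract_g lact_mk)

lemma phi_in: "a \<in> carrier A \<Longrightarrow> a' \<in> carrier A \<Longrightarrow> phiC (a, a') \<in> carrier C"
proof -
  assume a: "a \<in> carrier A" "a' \<in> carrier A"
  have "phiC (a, a') = phiC (mkA (\<lambda>k. rA k a), mkA (\<lambda>k. rA k a'))"
    using A_rep a by metis
  also have "\<dots> = mkC (\<lambda>i j. rA i a \<otimes> rA j a')" using a rA by (intro phi_mk) auto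
  finally show ?thesis using a rA by (auto intro!: mkC_in)
qed

lemma C_abelian: "abelian_group C"
proof (rule abelian_groupI)
  fix x y assume "x \<in> carrier C" "y \<in> carrier C"
  then show "x \<oplus>\<^bsub>C\<^esub> y \<in> carrier C"
    using C_rep[of x] C_rep[of y] rC mkC_add[of "\<lambda>i j. rC i j x" "\<lambda>i j. rC i j y"]
    by (metis (no_types, lifting) a_closed mkC_in)
next
  show "\<zero>\<^bsub>C\<^esub> \<in> carrier C" unfolding zero_C by (rule mkC_in) simp
next
  fix x y z assume c: "x \<in> carrier C" "y \<in> carrier C" "z \<in> carrier C"
  define Xc where "Xc = (\<lambda>i j. rC i j x)"
  define Yc where "Yc = (\<lambda>i j. rC i j y)"
  define Zc where "Zc = (\<lambda>i j. rC i j z)"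
  have cX: "\<And>i j. i \<in> I \<Longrightarrow> j \<in> I \<Longrightarrow> Xc i j \<in> carrier B" using c rC by (simp add: Xc_def)
  have cY: "\<And>i j. i \<in> I \<Longrightarrow> j \<in> I \<Longrightarrow> Yc i j \<in> carrier B" using c rC by (simp add: Yc_def)
  have cZ: "\<And>i j. i \<in> I \<Longrightarrow> j \<in> I \<Longrightarrow> Zc i j \<in> carrier B" using c rC by (simp add: Zc_def)
  have ex: "x = mkC Xc" "y = mkC Yc" "z = mkC Zc" using c C_rep by (auto simp: Xc_def Yc_def Zc_def)
  show "x \<oplus>\<^bsub>C\<^esub> y \<oplus>\<^bsub>C\<^esub> z = x \<oplus>\<^bsub>C\<^esub> (y \<oplus>\<^bsub>C\<^esub> z)"
    unfolding ex using cX cY cZ by (simp add: mkC_add, intro mkC_cong, simp add: a_assoc)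
next
  fix x y assume c: "x \<in> carrier C" "y \<in> carrier C"
  define Xc where "Xc = (\<lambda>i j. rC i j x)"
  define Yc where "Yc = (\<lambda>i j. rC i j y)"
  have cX: "\<And>i j. i \<in> I \<Longrightarrow> j \<in> I \<Longrightarrow> Xc i j \<in> carrier B" using c rC by (simp add: Xc_def)
  have cY: "\<And>i j. i \<in> I \<Longrightarrow> j \<in> I \<Longrightarrow> Yc i j \<in> carrier B" using c rC by (simp add: Yc_def)
  have ex: "x = mkC Xc" "y = mkC Yc" using c C_rep by (auto simp: Xc_def Yc_def)
  show "x \<oplus>\<^bsub>C\<^esub> y = y \<oplus>\<^bsub>C\<^esub> x"
    unfolding ex using cX cY by (simp add: mkC_add, intro mkC_cong, simp add: a_comm)
next
  fix x assume c: "x \<in> carrier C"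
  define Xc where "Xc = (\<lambda>i j. rC i j x)"
  have cX: "\<And>i j. i \<in> I \<Longrightarrow> j \<in> I \<Longrightarrow> Xc i j \<in> carrier B" using c rC by (simp add: Xc_def)
  have ex: "x = mkC Xc" using c C_rep by (auto simp: Xc_def)
  show "\<zero>\<^bsub>C\<^esub> \<oplus>\<^bsub>C\<^esub> x = x"
    unfolding ex zero_C using cX by (simp add: mkC_add, intro mkC_cong, simp)
  have "mkC (\<lambda>i j. \<ominus> Xc i j) \<in> carrier C" using cX by (intro mkC_in) simp
  moreover have "mkC (\<lambda>i j. \<ominus> Xc i j) \<oplus>\<^bsub>C\<^esub> x = \<zero>\<^bsub>C\<^esub>"
    unfolding ex zero_C using cX by (simp add: mkC_add, intro mkC_cong, simp add: l_neg)
  ultimately show "\<exists>y\<in>carrier C. y \<oplus>\<^bsub>C\<^esub> x = \<zero>\<^bsub>C\<^esub>" by blast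
qed

abbreviation "Bc' \<equiv> coinvariants A lact ract gg"

lemma coinv_iff:
  assumes r: "r \<in> carrier A"
  shows "r \<in> Bc' \<longleftrightarrow> (\<forall>i\<in>I. \<forall>j\<in>I. rA i r \<ominus> rA j r \<in> Jp i j)"
proof -
  have rr: "r = mkA (\<lambda>k. rA k r)" using A_rep r by blast
  have c: "\<And>k. k \<in> I \<Longrightarrow> rA k r \<in> carrier B" using rA r by blast
  have "lact r gg = mkC (\<lambda>i j. rA i r)" by (subst rr) (simp add: lact_g c)
  moreover have "ract gg r = mkC (\<lambda>i j. rA j r)" by (subst rr) (simp add: ract_g c)
  ultimately show ?thesis using r c by (simp add: coinvariants_def mkC_eq_iff)
qed

lemma iota_coinv: "x \<in> carrier B \<Longrightarrow> mkA (\<lambda>_. x) \<in> Bc'"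
  unfolding coinvariants_def using lact_g[of "\<lambda>_. x"] ract_g[of "\<lambda>_. x"]
  by (simp add: mkA_in)

lemma coinv_sub: "Bc' \<subseteq> carrier A"
  by (auto simp: coinvariants_def)

end

context covl
begin

interpretation TA: tr Bc' "carrier A" "add A" "monoid.mult A" "carrier A" "add A" "monoid.mult A" .

lemma zero_A_in: "\<zero>\<^bsub>A\<^esub> \<in> carrier A"
  unfolding zero_A by (rule mkA_in) simp

lemma zero_A_add: "\<zero>\<^bsub>A\<^esub> \<oplus>\<^bsub>A\<^esub> \<zero>\<^bsub>A\<^esub> = \<zero>\<^bsub>A\<^esub>"
  unfolding zero_A by (simp add: mkA_add)

lemma K0l: "n \<in> carrier A \<Longrightarrow> fs_single (\<zero>\<^bsub>A\<^esub>, n) \<in> TA.T"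
  by (rule TA.T_zero_left) (simp_all add: zero_A_in zero_A_add)

lemma K0r: "m \<in> carrier A \<Longrightarrow> fs_single (m, \<zero>\<^bsub>A\<^esub>) \<in> TA.T"
  by (rule TA.T_zero_right) (simp_all add: zero_A_in zero_A_add)

lemma e_zero: "i \<in> I \<Longrightarrow> u \<in> J i \<Longrightarrow> e i u = \<zero>\<^bsub>A\<^esub>"
proof -
  assume i: "i \<in> I" and u: "u \<in> J i"
  have uc: "u \<in> carrier B" using i u Jsub by blast
  show ?thesis unfolding e_def zero_A
    by (rule mkA_eq) (use uc u in \<open>auto simp: a_minus_def additive_subgroup.zero_closed ideal.axioms(1) idl\<close>)
qed

lemma e_zero': "e i \<zero> = \<zero>\<^bsub>A\<^esub>"
  unfolding e_def zero_A by (rule mkA_cong) simp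

lemma e_mult_iota: "x \<in> carrier B \<Longrightarrow> y \<in> carrier B \<Longrightarrow> e i x \<otimes>\<^bsub>A\<^esub> mkA (\<lambda>_. y) = e i (x \<otimes> y)"
  unfolding e_def by (subst mkA_mult) (auto intro!: mkA_cong)

lemma iota_mult_e: "x \<in> carrier B \<Longrightarrow> y \<in> carrier B \<Longrightarrow> mkA (\<lambda>_. y) \<otimes>\<^bsub>A\<^esub> e i x = e i (y \<otimes> x)"
  unfolding e_def by (subst mkA_mult) (auto intro!: mkA_cong)

lemma e_add: "x \<in> carrier B \<Longrightarrow> y \<in> carrier B \<Longrightarrow> e i x \<oplus>\<^bsub>A\<^esub> e i y = e i (x \<oplus> y)"
  unfolding e_def by (subst mkA_add) (auto intro!: mkA_cong)

lemma L_bal: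
  assumes "x \<in> carrier B" "y \<in> carrier B"
  shows "TA.teq (fs_single (e i x, e j y)) (fs_single (e i \<one>, e j (x \<otimes> y)))"
proof -
  have "TA.teq (fs_single (e i \<one> \<otimes>\<^bsub>A\<^esub> mkA (\<lambda>_. x), e j y))
      (fs_single (e i \<one>, mkA (\<lambda>_. x) \<otimes>\<^bsub>A\<^esub> e j y))"
    using assms by (intro TA.teq_bal e_in iota_coinv) auto
  then show ?thesis using assms by (simp add: e_mult_iota iota_mult_e)
qed

lemma L_kill:
  assumes i: "i \<in> I" and u: "u \<in> J i"
  shows "fs_single (e i \<one>, e j u) \<in> TA.T"
proof -
  have uc: "u \<in> carrier B" using assms Jsub by blast
  have "TA.teq (fs_single (e i \<one> \<otimes>\<^bsub>A\<^esub> mkA (\<lambda>_. u), e j \<one>))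
      (fs_single (e i \<one>, mkA (\<lambda>_. u) \<otimes>\<^bsub>A\<^esub> e j \<one>))"
    using uc by (intro TA.teq_bal iota_coinv e_in) auto
  then have "TA.teq (fs_single (\<zero>\<^bsub>A\<^esub>, e j \<one>)) (fs_single (e i \<one>, e j u))"
    using uc e_zero[OF i u] by (simp add: e_mult_iota iota_mult_e)
  moreover have "fs_single (\<zero>\<^bsub>A\<^esub>, e j \<one>) \<in> TA.T" by (intro K0l e_in) simp
  ultimately show ?thesis by (rule TA.teq_T_right)
qed

lemma sub_helper: "z \<in> carrier B \<Longrightarrow> z' \<in> carrier B \<Longrightarrow> u \<in> carrier B \<Longrightarrow> v \<in> carrier B \<Longrightarrow>
    z \<ominus> z' = u \<oplus> v \<Longrightarrow> z \<ominus> (z' \<oplus> u) = v"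
proof -
  assume c: "z \<in> carrier B" "z' \<in> carrier B" "u \<in> carrier B" "v \<in> carrier B" and e: "z \<ominus> z' = u \<oplus> v"
  have "z = (z \<ominus> z') \<oplus> z'" using c by algebra
  then have "z = (u \<oplus> v) \<oplus> z'" using e by simp
  then show ?thesis using c by algebra
qed

lemma L1:
  assumes i: "i \<in> I" and j: "j \<in> I" and z: "z \<in> carrier B" and z': "z' \<in> carrier B"
    and d: "z \<ominus> z' \<in> Jp i j"
  shows "TA.teq (fs_single (e i \<one>, e j z)) (fs_single (e i \<one>, e j z'))"
proof -
  obtain u v where u: "u \<in> J i" and v: "v \<in> J j" and uv: "z \<ominus> z' = u \<oplus> v"
    using d by (auto simp: sa_mem)
  have uc: "u \<in> carrier B" and vc: "v \<in> carrier B" using u v i j Jsub by blast+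
  have "z \<ominus> (z' \<oplus> u) = v" using sub_helper[OF z z' uc vc uv] .
  then have "e j z = e j (z' \<oplus> u)"
    unfolding e_def using z z' uc v
    by (intro mkA_eq) (auto simp: a_minus_def additive_subgroup.zero_closed ideal.axioms(1) idl)
  also have "\<dots> = e j z' \<oplus>\<^bsub>A\<^esub> e j u" using z' uc by (simp add: e_add)
  finally have ez: "e j z = e j z' \<oplus>\<^bsub>A\<^esub> e j u" .
  have "TA.teq (fs_single (e i \<one>, e j z))
      (\<lambda>p. fs_single (e i \<one>, e j z') p + fs_single (e i \<one>, e j u) p)"
    unfolding ez using z' uc by (intro TA.teq_addr e_in) auto
  also have "TA.teq \<dots> (fs_single (e i \<one>, e j z'))"
    using TA.teq_zero_right[of "fs_single (e i \<one>, e j u)" "fs_single (e i \<one>, e j z')"]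
      L_kill[OF i u, of j] by (simp add: TA.teq_T TA.teq_sym)
  finally show ?thesis .
qed

definition NFr :: "('i \<Rightarrow> 'i \<Rightarrow> 'b) \<Rightarrow> (('i \<Rightarrow> 'b set) \<times> ('i \<Rightarrow> 'b set) \<Rightarrow> int)" where
  "NFr R = (\<lambda>q. \<Sum>p\<in>I \<times> I. fs_single (e (fst p) \<one>, e (snd p) (R (fst p) (snd p))) q)"

definition NF :: "('i \<times> 'i \<Rightarrow> 'b set) \<Rightarrow> (('i \<Rightarrow> 'b set) \<times> ('i \<Rightarrow> 'b set) \<Rightarrow> int)" where
  "NF c = NFr (\<lambda>i j. rC i j c)"

lemma finII: "finite (I \<times> I)" using finI by simp

lemma NFr_cong:
  assumes "\<And>i j. i \<in> I \<Longrightarrow> j \<in> I \<Longrightarrow> R i j \<in> carrier B"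
    "\<And>i j. i \<in> I \<Longrightarrow> j \<in> I \<Longrightarrow> R' i j \<in> carrier B"
    "\<And>i j. i \<in> I \<Longrightarrow> j \<in> I \<Longrightarrow> R i j \<ominus> R' i j \<in> Jp i j"
  shows "TA.teq (NFr R) (NFr R')"
  unfolding NFr_def by (rule TA.teq_sum[OF finII]) (use assms in \<open>auto intro!: L1\<close>)

lemma NFr_add:
  assumes R: "\<And>i j. i \<in> I \<Longrightarrow> j \<in> I \<Longrightarrow> R i j \<in> carrier B"
    and R': "\<And>i j. i \<in> I \<Longrightarrow> j \<in> I \<Longrightarrow> R' i j \<in> carrier B"
  shows "TA.teq (NFr (\<lambda>i j. R i j \<oplus> R' i j)) (\<lambda>q. NFr R q + NFr R' q)"
proof -
  have "TA.teq (NFr (\<lambda>i j. R i j \<oplus> R' i j))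
     (\<lambda>q. \<Sum>p\<in>I \<times> I. fs_single (e (fst p) \<one>, e (snd p) (R (fst p) (snd p))) q
        + fs_single (e (fst p) \<one>, e (snd p) (R' (fst p) (snd p))) q)"
    unfolding NFr_def
  proof (rule TA.teq_sum[OF finII])
    fix p assume p: "p \<in> I \<times> I"
    then show "TA.teq (fs_single (e (fst p) \<one>, e (snd p) (R (fst p) (snd p) \<oplus> R' (fst p) (snd p))))
      (\<lambda>q. fs_single (e (fst p) \<one>, e (snd p) (R (fst p) (snd p))) q
        + fs_single (e (fst p) \<one>, e (snd p) (R' (fst p) (snd p))) q)"
      using R R' by (auto simp flip: e_add intro!: TA.teq_addr e_in)
  qed
  then show ?thesis unfolding NFr_def by (simp add: sum.distrib)
qed

lemma NFr_zero: "NFr (\<lambda>_ _. \<zero>) \<in> TA.T"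
  unfolding NFr_def by (rule TA.T_sum[OF finII]) (auto simp: e_zero' intro!: K0r e_in)

lemma NFr_in: "(\<And>i j. i \<in> I \<Longrightarrow> j \<in> I \<Longrightarrow> R i j \<in> carrier B) \<Longrightarrow> NFr R \<in> fsums (carrier A \<times> carrier A)"
  unfolding NFr_def by (rule fsums_sum[OF finII]) (auto intro!: fsums_single e_in)

lemma rC_mk:
  assumes R: "\<And>i j. i \<in> I \<Longrightarrow> j \<in> I \<Longrightarrow> R i j \<in> carrier B" and i: "i \<in> I" and j: "j \<in> I"
  shows "rC i j (mkC R) \<ominus> R i j \<in> Jp i j"
proof -
  have c: "mkC R \<in> carrier C" using R by (rule mkC_in)
  have "mkC (\<lambda>i j. rC i j (mkC R)) = mkC R" using C_rep[OF c] by simp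
  then show ?thesis using mkC_eq_iff[of "\<lambda>i j. rC i j (mkC R)" R] rC[OF c] R i j by auto
qed

lemma NF_mk:
  assumes R: "\<And>i j. i \<in> I \<Longrightarrow> j \<in> I \<Longrightarrow> R i j \<in> carrier B"
  shows "TA.teq (NF (mkC R)) (NFr R)"
  unfolding NF_def
proof (rule NFr_cong)
  fix i j assume i: "i \<in> I" and j: "j \<in> I"
  show "rC i j (mkC R) \<in> carrier B" using rC(1)[OF mkC_in[OF R] i j] .
  show "R i j \<in> carrier B" using R i j .
  show "rC i j (mkC R) \<ominus> R i j \<in> Jp i j" using rC_mk[OF R i j] .
qed

lemma NF_add:
  assumes c: "c \<in> carrier C" "c' \<in> carrier C"
  shows "TA.teq (NF (c \<oplus>\<^bsub>C\<^esub> c')) (\<lambda>q. NF c q + NF c' q)"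
proof -
  have r: "\<And>i j. i \<in> I \<Longrightarrow> j \<in> I \<Longrightarrow> rC i j c \<in> carrier B"
          "\<And>i j. i \<in> I \<Longrightarrow> j \<in> I \<Longrightarrow> rC i j c' \<in> carrier B" using rC c by auto
  have "c \<oplus>\<^bsub>C\<^esub> c' = mkC (\<lambda>i j. rC i j c \<oplus> rC i j c')"
  proof -
    have "mkC (\<lambda>i j. rC i j c) \<oplus>\<^bsub>C\<^esub> mkC (\<lambda>i j. rC i j c') = mkC (\<lambda>i j. rC i j c \<oplus> rC i j c')"
      by (rule mkC_add[OF r])
    then show ?thesis using C_rep[OF c(1), symmetric] C_rep[OF c(2), symmetric] by simp
  qed
  then have "TA.teq (NF (c \<oplus>\<^bsub>C\<^esub> c')) (NFr (\<lambda>i j. rC i j c \<oplus> rC i j c'))"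
    using r by (simp add: NF_mk)
  also have "TA.teq \<dots> (\<lambda>q. NF c q + NF c' q)" unfolding NF_def using r by (rule NFr_add)
  finally show ?thesis .
qed

lemma NF_zero: "NF \<zero>\<^bsub>C\<^esub> \<in> TA.T"
proof -
  have "TA.teq (NF \<zero>\<^bsub>C\<^esub>) (NFr (\<lambda>_ _. \<zero>))" unfolding zero_C by (rule NF_mk) simp
  then show ?thesis by (rule TA.teq_T_left[OF _ NFr_zero])
qed

end

context abelian_group
begin

lemma Psi_sum:
  assumes fin: "finite D" and h: "\<And>d. d \<in> D \<Longrightarrow> h d \<in> S" and ph: "phi \<in> S \<rightarrow> carrier G"
  shows "Psi G phi (\<lambda>q. \<Sum>d\<in>D. fs_single (h d) q) = (\<Oplus>d\<in>D. phi (h d))"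
  using fin h
proof (induction D rule: finite_induct)
  case empty then show ?case by (simp add: Psi_zero)
next
  case (insert x D')
  have s1: "fs_single (h x) \<in> fsums S" using insert by (intro fsums_single) simp
  have s2: "(\<lambda>q. \<Sum>d\<in>D'. fs_single (h d) q) \<in> fsums S"
    using insert by (intro fsums_sum fsums_single) auto
  have "(\<lambda>q. \<Sum>d\<in>insert x D'. fs_single (h d) q) = (\<lambda>q. fs_single (h x) q + (\<lambda>q. \<Sum>d\<in>D'. fs_single (h d) q) q)"
    using insert by simp
  then have "Psi G phi (\<lambda>q. \<Sum>d\<in>insert x D'. fs_single (h d) q)
      = phi (h x) \<oplus> Psi G phi (\<lambda>q. \<Sum>d\<in>D'. fs_single (h d) q)"
    using Psi_add[OF s1 s2 ph] Psi_single[OF _ ph, of "h x"] insert by simp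
  also have "\<dots> = phi (h x) \<oplus> (\<Oplus>d\<in>D'. phi (h d))" using insert by simp
  also have "\<dots> = (\<Oplus>d\<in>insert x D'. phi (h d))"
    using insert ph by (subst finsum_insert) (auto simp: Pi_iff)
  finally show ?case .
qed

end

context covl
begin

interpretation TA: tr Bc' "carrier A" "add A" "monoid.mult A" "carrier A" "add A" "monoid.mult A" .

lemma A_add_in: "a \<in> carrier A \<Longrightarrow> a' \<in> carrier A \<Longrightarrow> a \<oplus>\<^bsub>A\<^esub> a' \<in> carrier A"
proof -
  assume a: "a \<in> carrier A" "a' \<in> carrier A"
  have "mkA (\<lambda>k. rA k a) \<oplus>\<^bsub>A\<^esub> mkA (\<lambda>k. rA k a') = mkA (\<lambda>k. rA k a \<oplus> rA k a')"
    using a rA by (intro mkA_add) auto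
  moreover have "mkA (\<lambda>k. rA k a \<oplus> rA k a') \<in> carrier A" using a rA by (intro mkA_in) auto
  ultimately show ?thesis using A_rep[OF a(1), symmetric] A_rep[OF a(2), symmetric] by simp
qed

lemma A_add_rep: "a \<in> carrier A \<Longrightarrow> a' \<in> carrier A \<Longrightarrow> a \<oplus>\<^bsub>A\<^esub> a' = mkA (\<lambda>k. rA k a \<oplus> rA k a')"
proof -
  assume a: "a \<in> carrier A" "a' \<in> carrier A"
  have "mkA (\<lambda>k. rA k a) \<oplus>\<^bsub>A\<^esub> mkA (\<lambda>k. rA k a') = mkA (\<lambda>k. rA k a \<oplus> rA k a')"
    using a rA by (intro mkA_add) auto
  then show ?thesis using A_rep[OF a(1), symmetric] A_rep[OF a(2), symmetric] by simp
qed

lemma A_mult_rep: "a \<in> carrier A \<Longrightarrow> a' \<in> carrier A \<Longrightarrow> a \<otimes>\<^bsub>A\<^esub> a' = mkA (\<lambda>k. rA k a \<otimes> rA k a')"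
proof -
  assume a: "a \<in> carrier A" "a' \<in> carrier A"
  have "mkA (\<lambda>k. rA k a) \<otimes>\<^bsub>A\<^esub> mkA (\<lambda>k. rA k a') = mkA (\<lambda>k. rA k a \<otimes> rA k a')"
    using a rA by (intro mkA_mult) auto
  then show ?thesis using A_rep[OF a(1), symmetric] A_rep[OF a(2), symmetric] by simp
qed

lemma A_mult_in: "a \<in> carrier A \<Longrightarrow> a' \<in> carrier A \<Longrightarrow> a \<otimes>\<^bsub>A\<^esub> a' \<in> carrier A"
  using A_mult_rep rA by (simp add: mkA_in)

lemma phi_rep: "a \<in> carrier A \<Longrightarrow> a' \<in> carrier A \<Longrightarrow> phiC (a, a') = mkC (\<lambda>i j. rA i a \<otimes> rA j a')"
proof -
  assume a: "a \<in> carrier A" "a' \<in> carrier A"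
  have "phiC (mkA (\<lambda>k. rA k a), mkA (\<lambda>k. rA k a')) = mkC (\<lambda>i j. rA i a \<otimes> rA j a')"
    using a rA by (intro phi_mk) auto
  then show ?thesis using A_rep[OF a(1), symmetric] A_rep[OF a(2), symmetric] by simp
qed

lemma phi_l1:
  assumes a: "a \<in> carrier A" "a' \<in> carrier A" "a'' \<in> carrier A"
  shows "phiC (a \<oplus>\<^bsub>A\<^esub> a', a'') = phiC (a, a'') \<oplus>\<^bsub>C\<^esub> phiC (a', a'')"
proof -
  have c: "\<And>k. k \<in> I \<Longrightarrow> rA k a \<in> carrier B" "\<And>k. k \<in> I \<Longrightarrow> rA k a' \<in> carrier B"
    "\<And>k. k \<in> I \<Longrightarrow> rA k a'' \<in> carrier B" using rA a by auto
  have "phiC (a \<oplus>\<^bsub>A\<^esub> a', a'') = phiC (mkA (\<lambda>k. rA k a \<oplus> rA k a'), mkA (\<lambda>k. rA k a''))"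
    using A_add_rep[OF a(1,2)] A_rep[OF a(3)] by simp
  also have "\<dots> = mkC (\<lambda>i j. (rA i a \<oplus> rA i a') \<otimes> rA j a'')" using c by (intro phi_mk) auto
  also have "\<dots> = mkC (\<lambda>i j. rA i a \<otimes> rA j a'' \<oplus> rA i a' \<otimes> rA j a'')"
    using c by (intro mkC_cong) (simp add: l_distr)
  also have "\<dots> = phiC (a, a'') \<oplus>\<^bsub>C\<^esub> phiC (a', a'')"
    using c by (simp add: phi_rep a mkC_add)
  finally show ?thesis .
qed

lemma phi_l2:
  assumes a: "a \<in> carrier A" "a' \<in> carrier A" "a'' \<in> carrier A"
  shows "phiC (a, a' \<oplus>\<^bsub>A\<^esub> a'') = phiC (a, a') \<oplus>\<^bsub>C\<^esub> phiC (a, a'')"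
proof -
  have c: "\<And>k. k \<in> I \<Longrightarrow> rA k a \<in> carrier B" "\<And>k. k \<in> I \<Longrightarrow> rA k a' \<in> carrier B"
    "\<And>k. k \<in> I \<Longrightarrow> rA k a'' \<in> carrier B" using rA a by auto
  have "phiC (a, a' \<oplus>\<^bsub>A\<^esub> a'') = phiC (mkA (\<lambda>k. rA k a), mkA (\<lambda>k. rA k a' \<oplus> rA k a''))"
    using A_add_rep[OF a(2,3)] A_rep[OF a(1)] by simp
  also have "\<dots> = mkC (\<lambda>i j. rA i a \<otimes> (rA j a' \<oplus> rA j a''))" using c by (intro phi_mk) auto
  also have "\<dots> = mkC (\<lambda>i j. rA i a \<otimes> rA j a' \<oplus> rA i a \<otimes> rA j a'')"
    using c by (intro mkC_cong) (simp add: r_distr)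
  also have "\<dots> = phiC (a, a') \<oplus>\<^bsub>C\<^esub> phiC (a, a'')"
    using c by (simp add: phi_rep a mkC_add)
  finally show ?thesis .
qed

lemma phi_l3:
  assumes a: "a \<in> carrier A" "r \<in> Bc'" "a'' \<in> carrier A"
  shows "phiC (a \<otimes>\<^bsub>A\<^esub> r, a'') = phiC (a, r \<otimes>\<^bsub>A\<^esub> a'')"
proof -
  have rA': "r \<in> carrier A" using a(2) coinv_sub by blast
  have c: "\<And>k. k \<in> I \<Longrightarrow> rA k a \<in> carrier B" "\<And>k. k \<in> I \<Longrightarrow> rA k r \<in> carrier B"
    "\<And>k. k \<in> I \<Longrightarrow> rA k a'' \<in> carrier B" using rA a rA' by auto
  have co: "\<And>i j. i \<in> I \<Longrightarrow> j \<in> I \<Longrightarrow> rA i r \<ominus> rA j r \<in> Jp i j"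
    using coinv_iff[OF rA'] a(2) by blast
  have "phiC (a \<otimes>\<^bsub>A\<^esub> r, a'') = phiC (mkA (\<lambda>k. rA k a \<otimes> rA k r), mkA (\<lambda>k. rA k a''))"
    using A_mult_rep[OF a(1) rA'] A_rep[OF a(3)] by simp
  also have "\<dots> = mkC (\<lambda>i j. (rA i a \<otimes> rA i r) \<otimes> rA j a'')" using c by (intro phi_mk) auto
  also have "\<dots> = mkC (\<lambda>i j. rA i a \<otimes> (rA j r \<otimes> rA j a''))"
  proof (rule mkC_eq)
    fix i j assume i: "i \<in> I" and j: "j \<in> I"
    show "rA i a \<otimes> rA i r \<otimes> rA j a'' \<in> carrier B" using c i j by simp
    show "rA i a \<otimes> (rA j r \<otimes> rA j a'') \<in> carrier B" using c i j by simp
    have "rA i a \<otimes> rA i r \<otimes> rA j a'' \<ominus> rA i a \<otimes> (rA j r \<otimes> rA j a'')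
        = rA i a \<otimes> (rA i r \<ominus> rA j r) \<otimes> rA j a''"
      using c i j by algebra
    moreover have "rA i a \<otimes> (rA i r \<ominus> rA j r) \<otimes> rA j a'' \<in> Jp i j"
      using co[OF i j] c i j idlp[OF i j] by (simp add: ideal.I_l_closed ideal.I_r_closed)
    ultimately show "rA i a \<otimes> rA i r \<otimes> rA j a'' \<ominus> rA i a \<otimes> (rA j r \<otimes> rA j a'') \<in> Jp i j" by simp
  qed
  also have "\<dots> = phiC (mkA (\<lambda>k. rA k a), mkA (\<lambda>k. rA k r \<otimes> rA k a''))"
    using c by (intro phi_mk[symmetric]) auto
  also have "\<dots> = phiC (a, r \<otimes>\<^bsub>A\<^esub> a'')"
    using A_mult_rep[OF rA' a(3)] A_rep[OF a(1)] by simp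
  finally show ?thesis .
qed

lemma phi_Pi: "phiC \<in> carrier A \<times> carrier A \<rightarrow> carrier C"
  using phi_in by auto

lemma can_map_Psi: "can_map C lact ract gg f = Psi C phiC f"
  by (simp add: can_map_def Psi_def phiC_def)

lemma galois_if: "f \<in> TA.T \<Longrightarrow> can_map C lact ract gg f = \<zero>\<^bsub>C\<^esub>"
proof -
  assume f: "f \<in> TA.T"
  interpret CG: abelian_group C by (rule C_abelian)
  show ?thesis unfolding can_map_Psi
  proof (rule CG.Psi_vanish[OF f])
    show "phiC \<in> carrier A \<times> carrier A \<rightarrow> carrier C" by (rule phi_Pi)
  qed (use coinv_sub in \<open>auto simp: A_add_in A_mult_in phi_l1 phi_l2 phi_l3\<close>)
qed

end

context covl
begin

interpretation TA: tr Bc' "carrier A" "add A" "monoid.mult A" "carrier A" "add A" "monoid.mult A" .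

definition pA :: "('i \<Rightarrow> 'b) \<Rightarrow> 'i set \<Rightarrow> ('i \<Rightarrow> 'b set)" where
  "pA x S = mkA (\<lambda>k. if k \<in> S then x k else \<zero>)"

lemma pA_empty: "pA x {} = \<zero>\<^bsub>A\<^esub>"
  unfolding pA_def zero_A by simp

lemma pA_in: "(\<And>k. k \<in> I \<Longrightarrow> x k \<in> carrier B) \<Longrightarrow> pA x S \<in> carrier A"
  unfolding pA_def by (rule mkA_in) auto

lemma pA_insert:
  assumes x: "\<And>k. k \<in> I \<Longrightarrow> x k \<in> carrier B" and i: "i \<in> I" "i \<notin> S"
  shows "pA x (insert i S) = pA x S \<oplus>\<^bsub>A\<^esub> e i (x i)"
  unfolding pA_def e_def using x i by (subst mkA_add) (auto intro!: mkA_cong)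

lemma pA_all: "pA x I = mkA x"
  unfolding pA_def by (rule mkA_cong) simp

lemma N3:
  assumes a: "a \<in> carrier A" and a': "a' \<in> carrier A"
  shows "TA.teq (fs_single (a, a')) (NF (phiC (a, a')))"
proof -
  define x where "x = (\<lambda>k. rA k a)"
  define y where "y = (\<lambda>k. rA k a')"
  have x: "\<And>k. k \<in> I \<Longrightarrow> x k \<in> carrier B" using rA a by (simp add: x_def)
  have y: "\<And>k. k \<in> I \<Longrightarrow> y k \<in> carrier B" using rA a' by (simp add: y_def)
  have ax: "a = pA x I" using A_rep[OF a] by (simp add: pA_all x_def)
  have ay: "a' = pA y I" using A_rep[OF a'] by (simp add: pA_all y_def)
  have "TA.teq (fs_single (pA x I, a')) (\<lambda>q. \<Sum>i\<in>I. fs_single (e i (x i), a') q)"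
  proof (rule TA.decomp_left[OF finI, where F = "pA x" and u = "\<lambda>i. e i (x i)"])
    show "fs_single (pA x {}, a') \<in> TA.T" unfolding pA_empty using a' by (rule K0l)
  qed (use a' x in \<open>auto intro!: pA_in e_in simp: pA_insert subset_iff\<close>)
  also have "TA.teq \<dots> (\<lambda>q. \<Sum>i\<in>I. \<Sum>j\<in>I. fs_single (e i (x i), e j (y j)) q)"
  proof (rule TA.teq_sum[OF finI])
    fix i assume i: "i \<in> I"
    have "TA.teq (fs_single (e i (x i), pA y I)) (\<lambda>q. \<Sum>j\<in>I. fs_single (e i (x i), e j (y j)) q)"
    proof (rule TA.decomp_right[OF finI, where F = "pA y" and u = "\<lambda>j. e j (y j)"])
      show "fs_single (e i (x i), pA y {}) \<in> TA.T" unfolding pA_empty using x i by (intro K0r e_in) 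
    qed (use x y i in \<open>auto intro!: pA_in e_in simp: pA_insert subset_iff\<close>)
    then show "TA.teq (fs_single (e i (x i), a')) (\<lambda>q. \<Sum>j\<in>I. fs_single (e i (x i), e j (y j)) q)"
      using ay by simp
  qed
  also have "TA.teq \<dots> (\<lambda>q. \<Sum>i\<in>I. \<Sum>j\<in>I. fs_single (e i \<one>, e j (x i \<otimes> y j)) q)"
  proof (rule TA.teq_sum[OF finI])
    fix i assume i: "i \<in> I"
    show "TA.teq (\<lambda>q. \<Sum>j\<in>I. fs_single (e i (x i), e j (y j)) q)
        (\<lambda>q. \<Sum>j\<in>I. fs_single (e i \<one>, e j (x i \<otimes> y j)) q)"
      by (rule TA.teq_sum[OF finI]) (use x y i in \<open>auto intro: L_bal\<close>)
  qed
  also have "(\<lambda>q. \<Sum>i\<in>I. \<Sum>j\<in>I. fs_single (e i \<one>, e j (x i \<otimes> y j)) q) = NFr (\<lambda>i j. x i \<otimes> y j)"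
    unfolding NFr_def by (rule ext) (simp add: sum.cartesian_product split_beta)
  also have "TA.teq \<dots> (NF (phiC (a, a')))"
  proof -
    have "phiC (a, a') = mkC (\<lambda>i j. x i \<otimes> y j)" using phi_rep[OF a a'] by (simp add: x_def y_def)
    then show ?thesis using NF_mk[of "\<lambda>i j. x i \<otimes> y j"] x y by (simp add: TA.teq_sym)
  qed
  finally show ?thesis using ax by simp
qed

lemma NF_diff:
  assumes c: "c \<in> carrier C" "d \<in> carrier C"
  shows "TA.teq (NF (c \<ominus>\<^bsub>C\<^esub> d)) (\<lambda>q. NF c q - NF d q)"
proof -
  interpret CG: abelian_group C by (rule C_abelian)
  have cd: "c \<ominus>\<^bsub>C\<^esub> d \<in> carrier C" using c by simp
  have e: "(c \<ominus>\<^bsub>C\<^esub> d) \<oplus>\<^bsub>C\<^esub> d = c" using c by (simp add: a_minus_def CG.a_assoc CG.l_neg)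
  have "TA.teq (NF c) (\<lambda>q. NF (c \<ominus>\<^bsub>C\<^esub> d) q + NF d q)"
    using NF_add[OF cd c(2)] e by simp
  then have "TA.teq (\<lambda>q. NF c q - NF d q) (\<lambda>q. (NF (c \<ominus>\<^bsub>C\<^esub> d) q + NF d q) - NF d q)"
    by (rule TA.teq_diff[OF _ TA.teq_refl])
  then show ?thesis by (simp add: TA.teq_sym)
qed

lemma claim:
  assumes f: "f \<in> fsums (carrier A \<times> carrier A)"
  shows "TA.teq f (NF (Psi C phiC f))"
proof -
  interpret CG: abelian_group C by (rule C_abelian)
  show ?thesis
  proof (rule fsums_induct[OF f, where P = "\<lambda>f. TA.teq f (NF (Psi C phiC f))"])
    show "TA.teq (\<lambda>_. 0) (NF (Psi C phiC (\<lambda>_. 0)))"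
      using NF_zero by (simp add: CG.Psi_zero TA.teq_T[symmetric] TA.teq_sym)
  next
    fix f p assume fs: "f \<in> fsums (carrier A \<times> carrier A)" and p: "p \<in> carrier A \<times> carrier A"
      and IH: "TA.teq f (NF (Psi C phiC f))"
    have sp: "fs_single p \<in> fsums (carrier A \<times> carrier A)" using p by (rule fsums_single)
    have Pf: "Psi C phiC f \<in> carrier C" using CG.Psi_closed[OF fs phi_Pi] .
    have pp: "phiC p \<in> carrier C" using p phi_Pi by auto
    have ps: "Psi C phiC (\<lambda>q. f q + fs_single p q) = Psi C phiC f \<oplus>\<^bsub>C\<^esub> phiC p"
      using CG.Psi_add[OF fs sp phi_Pi] CG.Psi_single[OF p phi_Pi] by simp
    have N3p: "TA.teq (fs_single p) (NF (phiC p))" using N3[of "fst p" "snd p"] p by auto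
    have "TA.teq (\<lambda>q. f q + fs_single p q) (\<lambda>q. NF (Psi C phiC f) q + NF (phiC p) q)"
      by (rule TA.teq_add[OF IH N3p])
    also have "TA.teq \<dots> (NF (Psi C phiC f \<oplus>\<^bsub>C\<^esub> phiC p))"
      by (rule TA.teq_sym[OF NF_add[OF Pf pp]])
    finally show "TA.teq (\<lambda>q. f q + fs_single p q) (NF (Psi C phiC (\<lambda>q. f q + fs_single p q)))"
      unfolding ps .
  next
    fix f p assume fs: "f \<in> fsums (carrier A \<times> carrier A)" and p: "p \<in> carrier A \<times> carrier A"
      and IH: "TA.teq f (NF (Psi C phiC f))"
    have sp: "fs_single p \<in> fsums (carrier A \<times> carrier A)" using p by (rule fsums_single)
    have Pf: "Psi C phiC f \<in> carrier C" using CG.Psi_closed[OF fs phi_Pi] .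
    have pp: "phiC p \<in> carrier C" using p phi_Pi by auto
    have "(\<lambda>q. f q - fs_single p q) = (\<lambda>q. f q + (\<lambda>q. - fs_single p q) q)" by simp
    then have ps: "Psi C phiC (\<lambda>q. f q - fs_single p q) = Psi C phiC f \<ominus>\<^bsub>C\<^esub> phiC p"
      using CG.Psi_add[OF fs fsums_neg[OF sp] phi_Pi] CG.Psi_neg[OF sp phi_Pi] CG.Psi_single[OF p phi_Pi]
      by (simp add: a_minus_def)
    have N3p: "TA.teq (fs_single p) (NF (phiC p))" using N3[of "fst p" "snd p"] p by auto
    have "TA.teq (\<lambda>q. f q - fs_single p q) (\<lambda>q. NF (Psi C phiC f) q - NF (phiC p) q)"
      by (rule TA.teq_diff[OF IH N3p])
    also have "TA.teq \<dots> (NF (Psi C phiC f \<ominus>\<^bsub>C\<^esub> phiC p))"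
      by (rule TA.teq_sym[OF NF_diff[OF Pf pp]])
    finally show "TA.teq (\<lambda>q. f q - fs_single p q) (NF (Psi C phiC (\<lambda>q. f q - fs_single p q)))"
      unfolding ps .
  qed
qed

lemma galois_only_if:
  assumes f: "f \<in> fsums (carrier A \<times> carrier A)" and z: "can_map C lact ract gg f = \<zero>\<^bsub>C\<^esub>"
  shows "f \<in> TA.T"
proof -
  have "TA.teq f (NF \<zero>\<^bsub>C\<^esub>)" using claim[OF f] z by (simp add: can_map_Psi)
  then show ?thesis by (rule TA.teq_T_left[OF _ NF_zero])
qed

end

context covl
begin

lemma phi_e: "i \<in> I \<Longrightarrow> j \<in> I \<Longrightarrow> x \<in> carrier B \<Longrightarrow>
   phiC (e i \<one>, e j x) = mkC (\<lambda>k l. if k = i \<and> l = j then x else \<zero>)"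
  unfolding e_def by (subst phi_mk) (auto intro!: mkC_cong)

lemma finsum_units:
  assumes P: "finite P" "P \<subseteq> I \<times> I" and R: "\<And>i j. i \<in> I \<Longrightarrow> j \<in> I \<Longrightarrow> R i j \<in> carrier B"
  shows "(\<Oplus>\<^bsub>C\<^esub>p\<in>P. mkC (\<lambda>k l. if k = fst p \<and> l = snd p then R k l else \<zero>))
       = mkC (\<lambda>k l. if (k, l) \<in> P then R k l else \<zero>)"
  using P
proof (induction P rule: finite_induct)
  case empty
  interpret CG: abelian_group C by (rule C_abelian)
  show ?case by (simp add: zero_C)
next
  case (insert p P')
  interpret CG: abelian_group C by (rule C_abelian)
  have Pi: "(\<lambda>p. mkC (\<lambda>k l. if k = fst p \<and> l = snd p then R k l else \<zero>)) \<in> insert p P' \<rightarrow> carrier C"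
    using R by (auto intro!: mkC_in)
  have "(\<Oplus>\<^bsub>C\<^esub>p\<in>insert p P'. mkC (\<lambda>k l. if k = fst p \<and> l = snd p then R k l else \<zero>))
     = mkC (\<lambda>k l. if k = fst p \<and> l = snd p then R k l else \<zero>) \<oplus>\<^bsub>C\<^esub>
       (\<Oplus>\<^bsub>C\<^esub>p\<in>P'. mkC (\<lambda>k l. if k = fst p \<and> l = snd p then R k l else \<zero>))"
    using insert Pi by (subst CG.finsum_insert) auto
  also have "\<dots> = mkC (\<lambda>k l. if k = fst p \<and> l = snd p then R k l else \<zero>) \<oplus>\<^bsub>C\<^esub>
       mkC (\<lambda>k l. if (k, l) \<in> P' then R k l else \<zero>)" using insert by simp
  also have "\<dots> = mkC (\<lambda>k l. (if k = fst p \<and> l = snd p then R k l else \<zero>) \<oplus> (if (k, l) \<in> P' then R k l else \<zero>))"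
    using R by (intro mkC_add) auto
  also have "\<dots> = mkC (\<lambda>k l. if (k, l) \<in> insert p P' then R k l else \<zero>)"
    using R insert by (intro mkC_cong) auto
  finally show ?case .
qed

lemma surj:
  assumes c: "c \<in> carrier C"
  shows "NF c \<in> fsums (carrier A \<times> carrier A) \<and> can_map C lact ract gg (NF c) = c"
proof
  have r: "\<And>i j. i \<in> I \<Longrightarrow> j \<in> I \<Longrightarrow> rC i j c \<in> carrier B" using rC c by auto
  show "NF c \<in> fsums (carrier A \<times> carrier A)" unfolding NF_def using r by (rule NFr_in)
  interpret CG: abelian_group C by (rule C_abelian)
  have "can_map C lact ract gg (NF c)
      = (\<Oplus>\<^bsub>C\<^esub>p\<in>I \<times> I. phiC (e (fst p) \<one>, e (snd p) (rC (fst p) (snd p) c)))"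
    unfolding can_map_Psi NF_def NFr_def
    by (rule CG.Psi_sum[OF finII _ phi_Pi]) (use r in \<open>auto intro!: e_in\<close>)
  also have "\<dots> = (\<Oplus>\<^bsub>C\<^esub>p\<in>I \<times> I. mkC (\<lambda>k l. if k = fst p \<and> l = snd p then rC k l c else \<zero>))"
  proof (rule CG.finsum_cong')
    show "(\<lambda>p. mkC (\<lambda>k l. if k = fst p \<and> l = snd p then rC k l c else \<zero>)) \<in> I \<times> I \<rightarrow> carrier C"
      using r by (auto intro!: mkC_in)
    fix p assume p: "p \<in> I \<times> I"
    then have "phiC (e (fst p) \<one>, e (snd p) (rC (fst p) (snd p) c))
        = mkC (\<lambda>k l. if k = fst p \<and> l = snd p then rC (fst p) (snd p) c else \<zero>)"
      using r by (intro phi_e) auto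
    also have "\<dots> = mkC (\<lambda>k l. if k = fst p \<and> l = snd p then rC k l c else \<zero>)"
      by (intro mkC_cong) auto
    finally show "phiC (e (fst p) \<one>, e (snd p) (rC (fst p) (snd p) c))
        = mkC (\<lambda>k l. if k = fst p \<and> l = snd p then rC k l c else \<zero>)" .
  qed simp
  also have "\<dots> = mkC (\<lambda>k l. if (k, l) \<in> I \<times> I then rC k l c else \<zero>)"
    using r finII by (intro finsum_units) auto
  also have "\<dots> = mkC (\<lambda>k l. rC k l c)" by (intro mkC_cong) auto
  also have "\<dots> = c" using C_rep[OF c] by simp
  finally show "can_map C lact ract gg (NF c) = c" .
qed

lemma cov_rep_eq: "cov_rep B J i j c = rC i j c"
  by (simp add: cov_rep_def rC_def cov_pij_def)

lemma eps_g: "cov_eps B J I gg = \<one>\<^bsub>A\<^esub>"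
proof -
  have "cov_eps B J I gg = mkA (\<lambda>i. rC i i gg)"
    unfolding cov_eps_def mkA_def cov_pi_def cov_rep_eq ..
  also have "\<dots> = mkA (\<lambda>_. \<one>)"
  proof (rule mkA_eq)
    fix k assume k: "k \<in> I"
    show "rC k k gg \<in> carrier B" using rC[OF g_in k k] by simp
    show "\<one> \<in> carrier B" by simp
    show "rC k k gg \<ominus> \<one> \<in> J k" using rC_mk[of "\<lambda>_ _. \<one>" k k] k Jp_self[OF k] g_mk by simp
  qed
  finally show ?thesis by (simp add: one_A)
qed

end

context covl
begin

interpretation TC: tr "carrier A" "carrier C" "add C" ract "carrier C" "add C" lact .

lemma zero_C_in: "\<zero>\<^bsub>C\<^esub> \<in> carrier C"
  unfolding zero_C by (rule mkC_in) simp

lemma zero_C_add: "\<zero>\<^bsub>C\<^esub> \<oplus>\<^bsub>C\<^esub> \<zero>\<^bsub>C\<^esub> = \<zero>\<^bsub>C\<^esub>"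
  unfolding zero_C by (simp add: mkC_add)

lemma restrict_split: "(\<lambda>(i, l)\<in>I \<times> I. Jp i l +> F i l) = mkC F"
  unfolding mkC_def by (rule restrict_ext) (auto simp: split_beta)

definition Dk :: "'i \<Rightarrow> ('i \<times> 'i \<Rightarrow> 'b set)" where
  "Dk k = mkC (\<lambda>m j. if k = j then \<one> else \<zero>)"

definition Gk :: "'i \<Rightarrow> ('i \<times> 'i \<Rightarrow> 'b set)" where
  "Gk k = mkC (\<lambda>i l. rC i k gg)"

lemma Dk_in: "Dk k \<in> carrier C" unfolding Dk_def by (rule mkC_in) simp

lemma Gk_in: "k \<in> I \<Longrightarrow> Gk k \<in> carrier C" unfolding Gk_def using rC[OF g_in] by (intro mkC_in) auto

lemma Delta_eq: "cov_Delta B J I gg = (\<lambda>q. \<Sum>k\<in>I. fs_single (Gk k, Dk k) q)"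
  unfolding cov_Delta_def cov_pij_def cov_rep_eq restrict_split Gk_def Dk_def ..

lemma stepA: "TC.teq (fs_single (gg, gg)) (\<lambda>q. \<Sum>k\<in>I. fs_single (gg, Dk k) q)"
proof -
  define F where "F = (\<lambda>S. mkC (\<lambda>m j. if j \<in> S then \<one> else \<zero>))"
  have FI: "F I = gg" unfolding F_def g_mk by (rule mkC_cong) simp
  have "TC.teq (fs_single (gg, F I)) (\<lambda>q. \<Sum>k\<in>I. fs_single (gg, Dk k) q)"
  proof (rule TC.decomp_right[OF finI, where F = F and u = Dk])
    show "fs_single (gg, F {}) \<in> TC.T"
      unfolding F_def by (rule TC.T_zero_right) (simp_all add: g_in zero_C_in zero_C_add flip: zero_C)
    show "gg \<in> carrier C" by (rule g_in)
    show "\<And>S'. S' \<subseteq> I \<Longrightarrow> F S' \<in> carrier C" unfolding F_def by (intro mkC_in) simp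
    show "\<And>i. i \<in> I \<Longrightarrow> Dk i \<in> carrier C" by (rule Dk_in)
    show "\<And>S' i. S' \<subseteq> I \<Longrightarrow> i \<in> I \<Longrightarrow> i \<notin> S' \<Longrightarrow> F (insert i S') = F S' \<oplus>\<^bsub>C\<^esub> Dk i"
      unfolding F_def Dk_def by (subst mkC_add) (auto intro!: mkC_cong)
  qed
  then show ?thesis using FI by simp
qed

lemma stepB:
  assumes k: "k \<in> I"
  shows "TC.teq (fs_single (Gk k, Dk k)) (fs_single (gg, Dk k))"
proof -
  have d: "\<And>i. i \<in> I \<Longrightarrow> rC i k gg \<ominus> \<one> \<in> Jp i k"
    using rC_mk[of "\<lambda>_ _. \<one>" _ k] k g_mk by simp
  define v where "v = (\<lambda>i. SOME v. v \<in> J k \<and> (\<exists>u\<in>J i. rC i k gg \<ominus> \<one> = u \<oplus> v))"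
  have vv: "v i \<in> J k \<and> (\<exists>u\<in>J i. rC i k gg \<ominus> \<one> = u \<oplus> v i)" if i: "i \<in> I" for i
  proof -
    have "\<exists>v. v \<in> J k \<and> (\<exists>u\<in>J i. rC i k gg \<ominus> \<one> = u \<oplus> v)" using d[OF i] by (auto simp: sa_mem)
    then show ?thesis unfolding v_def by (rule someI_ex)
  qed
  have vc: "v i \<in> carrier B" if "i \<in> I" for i using vv[OF that] Jsub[OF k] by blast
  have Gk_eq: "Gk k = gg \<oplus>\<^bsub>C\<^esub> mkC (\<lambda>i l. v i)"
  proof -
    have "Gk k = mkC (\<lambda>i l. \<one> \<oplus> v i)"
      unfolding Gk_def
    proof (rule mkC_eq)
      fix i l assume i: "i \<in> I" and l: "l \<in> I"
      show "rC i k gg \<in> carrier B" using rC[OF g_in i k] by simp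
      show "\<one> \<oplus> v i \<in> carrier B" using vc[OF i] by simp
      obtain u where u: "u \<in> J i" "rC i k gg \<ominus> \<one> = u \<oplus> v i" using vv[OF i] by blast
      have uc: "u \<in> carrier B" using u Jsub[OF i] by blast
      have "rC i k gg \<ominus> \<one> = v i \<oplus> u" using u uc vc[OF i] by (simp add: a_comm)
      then have "rC i k gg \<ominus> (\<one> \<oplus> v i) = u"
        by (rule sub_helper[OF rC(1)[OF g_in i k] one_closed vc[OF i] uc])
      then show "rC i k gg \<ominus> (\<one> \<oplus> v i) \<in> Jp i l" using u Jl[OF i l] by auto
    qed
    also have "\<dots> = gg \<oplus>\<^bsub>C\<^esub> mkC (\<lambda>i l. v i)" unfolding g_mk using vc by (subst mkC_add) auto
    finally show ?thesis .
  qed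
  have Vin: "mkC (\<lambda>i l. v i) \<in> carrier C" using vc by (intro mkC_in) auto
  have t1: "TC.teq (fs_single (Gk k, Dk k))
      (\<lambda>q. fs_single (gg, Dk k) q + fs_single (mkC (\<lambda>i l. v i), Dk k) q)"
    unfolding Gk_eq by (rule TC.teq_addl[OF g_in Vin Dk_in])
  have t2: "fs_single (mkC (\<lambda>i l. v i), Dk k) \<in> TC.T"
  proof -
    define F where "F = (\<lambda>S. mkC (\<lambda>i l. if i \<in> S then v i else \<zero>))"
    define U where "U = (\<lambda>i. mkC (\<lambda>i' l. if i' = i then v i else \<zero>))"
    have FI: "F I = mkC (\<lambda>i l. v i)" unfolding F_def by (rule mkC_cong) simp
    have Uin: "U i \<in> carrier C" if "i \<in> I" for i unfolding U_def using vc[OF that] by (intro mkC_in) auto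
    have "TC.teq (fs_single (F I, Dk k)) (\<lambda>q. \<Sum>i\<in>I. fs_single (U i, Dk k) q)"
    proof (rule TC.decomp_left[OF finI, where F = F and u = U])
      show "fs_single (F {}, Dk k) \<in> TC.T"
        unfolding F_def by (rule TC.T_zero_left) (simp_all add: Dk_in zero_C_in zero_C_add flip: zero_C)
      show "Dk k \<in> carrier C" by (rule Dk_in)
      show "\<And>S'. S' \<subseteq> I \<Longrightarrow> F S' \<in> carrier C" unfolding F_def using vc by (intro mkC_in) auto
      show "\<And>i. i \<in> I \<Longrightarrow> U i \<in> carrier C" by (rule Uin)
      show "\<And>S' i. S' \<subseteq> I \<Longrightarrow> i \<in> I \<Longrightarrow> i \<notin> S' \<Longrightarrow> F (insert i S') = F S' \<oplus>\<^bsub>C\<^esub> U i"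
        unfolding F_def U_def using vc by (subst mkC_add) (auto intro!: mkC_cong)
    qed
    moreover have "(\<lambda>q. \<Sum>i\<in>I. fs_single (U i, Dk k) q) \<in> TC.T"
    proof (rule TC.T_sum[OF finI])
      fix i assume i: "i \<in> I"
      define Row where "Row = mkC (\<lambda>i' l. if i' = i then \<one> else \<zero>)"
      have Rin: "Row \<in> carrier C" unfolding Row_def by (intro mkC_in) simp
      have rin: "mkA (\<lambda>_. v i) \<in> carrier A" using vc[OF i] by (intro mkA_in)
      have U_eq: "U i = ract Row (mkA (\<lambda>_. v i))"
        unfolding U_def Row_def using vc[OF i] by (subst ract_mk) (auto intro!: mkC_cong)
      have L0: "lact (mkA (\<lambda>_. v i)) (Dk k) = \<zero>\<^bsub>C\<^esub>"
        unfolding Dk_def zero_C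
      proof (subst lact_mk)
        show "mkC (\<lambda>i' j. v i \<otimes> (if k = j then \<one> else \<zero>)) = mkC (\<lambda>_ _. \<zero>)"
        proof (rule mkC_eq)
          fix i' j assume i': "i' \<in> I" and j: "j \<in> I"
          show "v i \<otimes> (if k = j then \<one> else \<zero>) \<in> carrier B" using vc[OF i] by simp
          show "\<zero> \<in> carrier B" by simp
          show "v i \<otimes> (if k = j then \<one> else \<zero>) \<ominus> \<zero> \<in> Jp i' j"
          proof (cases "k = j")
            case True
            then show ?thesis using vv[OF i] vc[OF i] Jr[OF i' j] by (auto simp: a_minus_def)
          next
            case False
            then show ?thesis using vc[OF i] idlp[OF i' j]
              by (simp add: a_minus_def additive_subgroup.zero_closed ideal.axioms(1))
          qed
        qed
      qed (use vc[OF i] in auto)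
      have "TC.teq (fs_single (ract Row (mkA (\<lambda>_. v i)), Dk k)) (fs_single (Row, lact (mkA (\<lambda>_. v i)) (Dk k)))"
        by (rule TC.teq_bal[OF Rin rin Dk_in])
      moreover have "fs_single (Row, \<zero>\<^bsub>C\<^esub>) \<in> TC.T"
        by (rule TC.T_zero_right[OF zero_C_in zero_C_add Rin])
      ultimately show "fs_single (U i, Dk k) \<in> TC.T"
        unfolding U_eq L0 by (rule TC.teq_T_left)
    qed
    ultimately have "fs_single (F I, Dk k) \<in> TC.T" by (rule TC.teq_T_left)
    then show ?thesis unfolding FI .
  qed
  have t3: "TC.teq (\<lambda>q. fs_single (gg, Dk k) q + fs_single (mkC (\<lambda>i l. v i), Dk k) q) (fs_single (gg, Dk k))"
  proof (rule TC.teq_sym, rule TC.teq_zero_right)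
    show "TC.teq (fs_single (mkC (\<lambda>i l. v i), Dk k)) (\<lambda>_. 0)"
      unfolding TC.teq_T by (rule t2)
  qed
  show ?thesis by (rule TC.teq_trans[OF t1 t3])
qed

lemma grouplike_g: "grouplike A C lact ract (cov_Delta B J I) (cov_eps B J I) gg"
proof -
  have "TC.teq (cov_Delta B J I gg) (\<lambda>q. \<Sum>k\<in>I. fs_single (gg, Dk k) q)"
    unfolding Delta_eq by (rule TC.teq_sum[OF finI]) (rule stepB)
  also have "TC.teq \<dots> (fs_single (gg, gg))" by (rule TC.teq_sym[OF stepA])
  finally have "TC.teq (cov_Delta B J I gg) (fs_single (gg, gg))" .
  then show ?thesis unfolding grouplike_def TC.teq_def using g_in eps_g by simp
qed

end

context covl
begin

interpretation TA: tr Bc' "carrier A" "add A" "monoid.mult A" "carrier A" "add A" "monoid.mult A" .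

lemma galois: "galois_coring A C lact ract (cov_Delta B J I) (cov_eps B J I) gg"
  unfolding galois_coring_def
proof (intro conjI ballI)
  show "grouplike A C lact ract (cov_Delta B J I) (cov_eps B J I) gg" by (rule grouplike_g)
next
  fix f assume f: "f \<in> fsums (carrier A \<times> carrier A)"
  show "(can_map C lact ract gg f = \<zero>\<^bsub>C\<^esub>) =
        (f \<in> tens_rel Bc' (carrier A) (add A) (monoid.mult A) (carrier A) (add A) (monoid.mult A))"
    using galois_if galois_only_if[OF f] by blast
next
  fix c assume c: "c \<in> carrier C"
  show "\<exists>f\<in>fsums (carrier A \<times> carrier A). can_map C lact ract gg f = c"
    using surj[OF c] by blast
qed

end

context covl
begin

definition FlatP :: bool where
  "FlatP \<longleftrightarrow> (\<forall>m\<in>I. \<forall>n\<in>I. \<forall>K. ideal K B \<longrightarrow>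
      (K <+>\<^bsub>B\<^esub> J n) \<inter> (J m <+>\<^bsub>B\<^esub> J n) \<subseteq> (J m \<inter> K) <+>\<^bsub>B\<^esub> J n)"

definition KS :: "'i set \<Rightarrow> 'b set" where
  "KS S = carrier B \<inter> (\<Inter>i\<in>S. J i)"

lemma KS_ideal: "finite S \<Longrightarrow> S \<subseteq> I \<Longrightarrow> ideal (KS S) B"
proof (induction S rule: finite_induct)
  case empty then show ?case by (simp add: KS_def oneideal)
next
  case (insert i S)
  have "KS (insert i S) = J i \<inter> KS S" using Jsub[of i] insert by (auto simp: KS_def)
  then show ?case using insert idl by (simp add: i_intersect)
qed

lemma KS_insert: "i \<in> I \<Longrightarrow> KS (insert i S) = J i \<inter> KS S"
  using Jsub[of i] by (auto simp: KS_def)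

lemma LemA:
  assumes F: FlatP and S: "finite S" "S \<subseteq> I" and n: "n \<in> I"
  shows "carrier B \<inter> (\<Inter>i\<in>S. Jp i n) \<subseteq> KS S <+>\<^bsub>B\<^esub> J n"
  using S
proof (induction S rule: finite_induct)
  case empty
  show ?case
  proof
    fix x assume "x \<in> carrier B \<inter> (\<Inter>i\<in>{}. Jp i n)"
    then have x: "x \<in> carrier B" by simp
    have e: "x = x \<oplus> \<zero>" using x by simp
    have z: "\<zero> \<in> J n" using idl[OF n] by (simp add: additive_subgroup.zero_closed ideal.axioms(1))
    have "\<exists>h\<in>KS {}. \<exists>h'\<in>J n. x = h \<oplus> h'"
      by (rule bexI[of _ x], rule bexI[of _ \<zero>]) (use e z x in \<open>auto simp: KS_def\<close>)
    then show "x \<in> KS {} <+>\<^bsub>B\<^esub> J n" unfolding sa_mem .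
  qed
next
  case (insert m S)
  have m: "m \<in> I" and SI: "S \<subseteq> I" using insert by auto
  show ?case
  proof
    fix x assume x: "x \<in> carrier B \<inter> (\<Inter>i\<in>insert m S. Jp i n)"
    then have "x \<in> KS S <+>\<^bsub>B\<^esub> J n" using insert SI by auto
    moreover have "x \<in> Jp m n" using x by auto
    ultimately have "x \<in> (J m \<inter> KS S) <+>\<^bsub>B\<^esub> J n"
      using F m n KS_ideal[OF insert(1) SI] unfolding FlatP_def by blast
    then show "x \<in> KS (insert m S) <+>\<^bsub>B\<^esub> J n" using KS_insert[OF m] by simp
  qed
qed

lemma LemB:
  assumes F: FlatP and S: "finite S" "S \<subseteq> I"
    and x: "\<And>i. i \<in> I \<Longrightarrow> x i \<in> carrier B"
    and comp: "\<And>i j. i \<in> I \<Longrightarrow> j \<in> I \<Longrightarrow> x i \<ominus> x j \<in> Jp i j"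
  shows "\<exists>b\<in>carrier B. \<forall>i\<in>S. b \<ominus> x i \<in> J i"
  using S
proof (induction S rule: finite_induct)
  case empty then show ?case by auto
next
  case (insert n S)
  have n: "n \<in> I" and SI: "S \<subseteq> I" using insert by auto
  obtain bS where bS: "bS \<in> carrier B" "\<forall>i\<in>S. bS \<ominus> x i \<in> J i" using insert SI by auto
  have "bS \<ominus> x n \<in> carrier B \<inter> (\<Inter>i\<in>S. Jp i n)"
  proof -
    have "bS \<ominus> x n \<in> Jp i n" if i: "i \<in> S" for i
    proof -
      have iI: "i \<in> I" using i SI by auto
      have e: "bS \<ominus> x n = (bS \<ominus> x i) \<oplus> (x i \<ominus> x n)" using bS x[OF iI] x[OF n] by algebra
      have "bS \<ominus> x i \<in> Jp i n" using bS i Jl[OF iI n] by auto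
      moreover have "x i \<ominus> x n \<in> Jp i n" using comp[OF iI n] .
      ultimately show ?thesis using e idlp[OF iI n]
        by (simp add: additive_subgroup.a_closed ideal.axioms(1))
    qed
    then show ?thesis using bS x[OF n] by auto
  qed
  then have "bS \<ominus> x n \<in> KS S <+>\<^bsub>B\<^esub> J n" using LemA[OF F insert(1) SI n] by blast
  then obtain k t where k: "k \<in> KS S" and t: "t \<in> J n" and kt: "bS \<ominus> x n = k \<oplus> t"
    by (auto simp: sa_mem)
  have kc: "k \<in> carrier B" using k by (simp add: KS_def)
  have tc: "t \<in> carrier B" using t Jsub[OF n] by blast
  define b where "b = bS \<ominus> k"
  have bc: "b \<in> carrier B" using bS kc by (simp add: b_def)
  have "\<forall>i\<in>insert n S. b \<ominus> x i \<in> J i"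
  proof
    fix i assume "i \<in> insert n S"
    then consider "i = n" | "i \<in> S" by auto
    then show "b \<ominus> x i \<in> J i"
    proof cases
      case 1
      have "b \<ominus> x n = t"
      proof -
        have "bS = k \<oplus> t \<oplus> x n"
        proof -
          have "bS = (bS \<ominus> x n) \<oplus> x n" using bS x[OF n] by algebra
          then show ?thesis using kt by simp
        qed
        then show ?thesis unfolding b_def using kc tc x[OF n] by algebra
      qed
      then show ?thesis using 1 t by simp
    next
      case 2
      have iI: "i \<in> I" using 2 SI by auto
      have e: "b \<ominus> x i = (bS \<ominus> x i) \<ominus> k" unfolding b_def using bS kc x[OF iI] by algebra
      have "k \<in> J i" using k 2 by (auto simp: KS_def)
      then show ?thesis using e bS 2 idl[OF iI]
        by (simp add: a_minus_def additive_subgroup.a_closed additive_subgroup.a_inv_closed ideal.axioms(1))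
    qed
  qed
  then show ?case using bc by blast
qed

lemma complete_from_flat:
  assumes F: FlatP
  shows "complete_covering B J I"
  unfolding complete_covering_def
proof
  fix a assume a: "a \<in> cov_Bc B J I"
  then have aA: "a \<in> carrier A" and cp: "\<forall>i\<in>I. \<forall>j\<in>I. cov_pit B J i j (a i) = cov_pit B J j i (a j)"
    by (auto simp: cov_Bc_def)
  define x where "x = (\<lambda>k. rA k a)"
  have x: "\<And>k. k \<in> I \<Longrightarrow> x k \<in> carrier B" using rA aA by (simp add: x_def)
  have ax: "\<And>k. k \<in> I \<Longrightarrow> a k = J k +> x k" using rA aA by (simp add: x_def)
  have comp: "x i \<ominus> x j \<in> Jp i j" if i: "i \<in> I" and j: "j \<in> I" for i j
  proof -
    have "Jp i j +> x i = Jp i j +> x j"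
      using cp i j ax pit[OF i j x[OF i]] pit'[OF i j x[OF j]] by simp
    then show ?thesis using rc_eq[OF idlp[OF i j] x[OF i] x[OF j]] by simp
  qed
  obtain b where b: "b \<in> carrier B" "\<forall>i\<in>I. b \<ominus> x i \<in> J i"
    using LemB[OF F finI _ x comp] by blast
  have "cov_iota B J I b = mkA (\<lambda>_. b)" by (rule iota_mk)
  also have "\<dots> = mkA x" using b x by (intro mkA_eq) auto
  also have "\<dots> = a" using A_rep[OF aA] by (simp add: x_def)
  finally show "\<exists>b\<in>carrier B. cov_iota B J I b = a" using b by blast
qed

end

definition addP :: "('b,'c) ring_scheme \<Rightarrow> 'b \<times> nat \<Rightarrow> 'b \<times> nat \<Rightarrow> 'b \<times> nat" where
  "addP R p q = (fst p \<oplus>\<^bsub>R\<^esub> fst q, 0)"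
definition zP :: "('b,'c) ring_scheme \<Rightarrow> 'b \<times> nat" where
  "zP R = (\<zero>\<^bsub>R\<^esub>, 0)"
definition lactP :: "('b,'c) ring_scheme \<Rightarrow> 'b \<Rightarrow> 'b \<times> nat \<Rightarrow> 'b \<times> nat" where
  "lactP R b p = (b \<otimes>\<^bsub>R\<^esub> fst p, 0)"
definition ractP :: "('b,'c) ring_scheme \<Rightarrow> 'b \<times> nat \<Rightarrow> 'b \<Rightarrow> 'b \<times> nat" where
  "ractP R p b = (fst p \<otimes>\<^bsub>R\<^esub> b, 0)"

context ring
begin

lemma cg_ideal:
  assumes L: "ideal L R"
  shows "comm_group \<lparr>carrier = L \<times> {0::nat}, monoid.mult = addP R, one = zP R\<rparr>"
proof -
  interpret L: ideal L R by fact
  show ?thesis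
  proof (rule comm_groupI)
    fix x y assume "x \<in> carrier \<lparr>carrier = L \<times> {0::nat}, monoid.mult = addP R, one = zP R\<rparr>"
        "y \<in> carrier \<lparr>carrier = L \<times> {0::nat}, monoid.mult = addP R, one = zP R\<rparr>"
    then show "x \<otimes>\<^bsub>\<lparr>carrier = L \<times> {0::nat}, monoid.mult = addP R, one = zP R\<rparr>\<^esub> y
        \<in> carrier \<lparr>carrier = L \<times> {0::nat}, monoid.mult = addP R, one = zP R\<rparr>"
      by (auto simp: addP_def)
  next
    show "\<one>\<^bsub>\<lparr>carrier = L \<times> {0::nat}, monoid.mult = addP R, one = zP R\<rparr>\<^esub>
        \<in> carrier \<lparr>carrier = L \<times> {0::nat}, monoid.mult = addP R, one = zP R\<rparr>"
      by (simp add: zP_def)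
  next
    fix x y z assume "x \<in> carrier \<lparr>carrier = L \<times> {0::nat}, monoid.mult = addP R, one = zP R\<rparr>"
        "y \<in> carrier \<lparr>carrier = L \<times> {0::nat}, monoid.mult = addP R, one = zP R\<rparr>"
        "z \<in> carrier \<lparr>carrier = L \<times> {0::nat}, monoid.mult = addP R, one = zP R\<rparr>"
    then show "x \<otimes>\<^bsub>\<lparr>carrier = L \<times> {0::nat}, monoid.mult = addP R, one = zP R\<rparr>\<^esub> y
          \<otimes>\<^bsub>\<lparr>carrier = L \<times> {0::nat}, monoid.mult = addP R, one = zP R\<rparr>\<^esub> z =
        x \<otimes>\<^bsub>\<lparr>carrier = L \<times> {0::nat}, monoid.mult = addP R, one = zP R\<rparr>\<^esub>
          (y \<otimes>\<^bsub>\<lparr>carrier = L \<times> {0::nat}, monoid.mult = addP R, one = zP R\<rparr>\<^esub> z)"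
      by (auto simp: addP_def a_assoc L.Icarr)
  next
    fix x y assume "x \<in> carrier \<lparr>carrier = L \<times> {0::nat}, monoid.mult = addP R, one = zP R\<rparr>"
        "y \<in> carrier \<lparr>carrier = L \<times> {0::nat}, monoid.mult = addP R, one = zP R\<rparr>"
    then show "x \<otimes>\<^bsub>\<lparr>carrier = L \<times> {0::nat}, monoid.mult = addP R, one = zP R\<rparr>\<^esub> y =
        y \<otimes>\<^bsub>\<lparr>carrier = L \<times> {0::nat}, monoid.mult = addP R, one = zP R\<rparr>\<^esub> x"
      by (auto simp: addP_def a_comm L.Icarr)
  next
    fix x assume "x \<in> carrier \<lparr>carrier = L \<times> {0::nat}, monoid.mult = addP R, one = zP R\<rparr>"
    then show "\<one>\<^bsub>\<lparr>carrier = L \<times> {0::nat}, monoid.mult = addP R, one = zP R\<rparr>\<^esub>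
          \<otimes>\<^bsub>\<lparr>carrier = L \<times> {0::nat}, monoid.mult = addP R, one = zP R\<rparr>\<^esub> x = x"
      by (auto simp: addP_def zP_def L.Icarr)
  next
    fix x assume x: "x \<in> carrier \<lparr>carrier = L \<times> {0::nat}, monoid.mult = addP R, one = zP R\<rparr>"
    then obtain a where a: "a \<in> L" "x = (a, 0)" by auto
    have "(\<ominus> a, 0) \<in> L \<times> {0::nat}" using a by simp
    moreover have "addP R (\<ominus> a, 0) x = zP R" using a by (simp add: addP_def zP_def L.Icarr l_neg)
    ultimately show "\<exists>y\<in>carrier \<lparr>carrier = L \<times> {0::nat}, monoid.mult = addP R, one = zP R\<rparr>.
        y \<otimes>\<^bsub>\<lparr>carrier = L \<times> {0::nat}, monoid.mult = addP R, one = zP R\<rparr>\<^esub> x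
        = \<one>\<^bsub>\<lparr>carrier = L \<times> {0::nat}, monoid.mult = addP R, one = zP R\<rparr>\<^esub>" by auto
  qed
qed

lemma lmod_ideal:
  assumes L: "ideal L R"
  shows "lmod R (L \<times> {0::nat}) (addP R) (zP R) (lactP R)"
proof -
  interpret L: ideal L R by fact
  show ?thesis unfolding lmod_def
    using cg_ideal[OF L]
    by (auto simp: addP_def lactP_def L.I_l_closed L.Icarr r_distr l_distr m_assoc)
qed

lemma rmod_ideal:
  assumes L: "ideal L R"
  shows "rmod R (L \<times> {0::nat}) (addP R) (zP R) (ractP R)"
proof -
  interpret L: ideal L R by fact
  show ?thesis unfolding rmod_def
    using cg_ideal[OF L]
    by (auto simp: addP_def ractP_def L.I_r_closed L.Icarr r_distr l_distr m_assoc)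
qed

end

lemma fs_map_id: "fs_map (\<lambda>(a, n). (a, id n)) h = h"
proof
  fix q
  have "{p. h p \<noteq> 0 \<and> (case p of (a, n) \<Rightarrow> (a, id n)) = q} = (if h q \<noteq> 0 then {q} else {})"
    by (auto simp: split_beta)
  then show "fs_map (\<lambda>(a, n). (a, id n)) h q = h q" by (simp add: fs_map_def)
qed

lemma fs_map_id2: "fs_map (\<lambda>(n, a). (id n, a)) h = h"
proof
  fix q
  have "{p. h p \<noteq> 0 \<and> (case p of (n, a) \<Rightarrow> (id n, a)) = q} = (if h q \<noteq> 0 then {q} else {})"
    by (auto simp: split_beta)
  then show "fs_map (\<lambda>(n, a). (id n, a)) h q = h q" by (simp add: fs_map_def)
qed

context covl
begin

lemma rA_mk: "(\<And>k. k \<in> I \<Longrightarrow> F k \<in> carrier B) \<Longrightarrow> k \<in> I \<Longrightarrow> rA k (mkA F) \<ominus> F k \<in> J k"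
proof -
  assume F: "\<And>k. k \<in> I \<Longrightarrow> F k \<in> carrier B" and k: "k \<in> I"
  have a: "mkA F \<in> carrier A" using F by (rule mkA_in)
  have "mkA (\<lambda>k. rA k (mkA F)) = mkA F" using A_rep[OF a] by simp
  then show ?thesis using mkA_eq_iff[of "\<lambda>k. rA k (mkA F)" F] rA[OF a] F k by auto
qed

lemma Qideal: "m \<in> I \<Longrightarrow> n \<in> I \<Longrightarrow> ideal K B \<Longrightarrow> ideal ((J m \<inter> K) <+>\<^bsub>B\<^esub> J n) B"
  by (simp add: add_ideals i_intersect idl)

lemma JL:
  assumes m: "m \<in> I" and n: "n \<in> I" and K: "ideal K B" and d: "d \<in> J m" and s: "s \<in> K <+>\<^bsub>B\<^esub> J n"
  shows "d \<otimes> s \<in> (J m \<inter> K) <+>\<^bsub>B\<^esub> J n" "s \<otimes> d \<in> (J m \<inter> K) <+>\<^bsub>B\<^esub> J n"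
proof -
  interpret Jm: ideal "J m" B by (rule idl[OF m])
  interpret Jn: ideal "J n" B by (rule idl[OF n])
  interpret K: ideal K B by fact
  obtain k t where k: "k \<in> K" and t: "t \<in> J n" and st: "s = k \<oplus> t" using s by (auto simp: sa_mem)
  have dc: "d \<in> carrier B" using d by (rule Jm.Icarr)
  have kc: "k \<in> carrier B" using k by (rule K.Icarr)
  have tc: "t \<in> carrier B" using t by (rule Jn.Icarr)
  have "d \<otimes> s = d \<otimes> k \<oplus> d \<otimes> t" using st dc kc tc by (simp add: r_distr)
  moreover have "d \<otimes> k \<in> J m \<inter> K" using d k dc kc by (simp add: Jm.I_r_closed K.I_l_closed)
  moreover have "d \<otimes> t \<in> J n" using t dc by (simp add: Jn.I_l_closed)
  ultimately show "d \<otimes> s \<in> (J m \<inter> K) <+>\<^bsub>B\<^esub> J n" unfolding sa_mem by blast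
  have "s \<otimes> d = k \<otimes> d \<oplus> t \<otimes> d" using st dc kc tc by (simp add: l_distr)
  moreover have "k \<otimes> d \<in> J m \<inter> K" using d k dc kc by (simp add: Jm.I_l_closed K.I_r_closed)
  moreover have "t \<otimes> d \<in> J n" using t dc by (simp add: Jn.I_r_closed)
  ultimately show "s \<otimes> d \<in> (J m \<inter> K) <+>\<^bsub>B\<^esub> J n" unfolding sa_mem by blast
qed

lemma em1_zero: "m \<in> I \<Longrightarrow> w \<in> J m \<Longrightarrow> e m \<one> \<otimes>\<^bsub>A\<^esub> cov_iota B J I w = \<zero>\<^bsub>A\<^esub>"
  using e_mult_iota[of "\<one>" w m] e_zero[of m w] Jsub[of m] by (auto simp: iota_mk)

lemma em1_zero': "m \<in> I \<Longrightarrow> w \<in> J m \<Longrightarrow> cov_iota B J I w \<otimes>\<^bsub>A\<^esub> e m \<one> = \<zero>\<^bsub>A\<^esub>"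
  using iota_mult_e[of "\<one>" w m] e_zero[of m w] Jsub[of m] by (auto simp: iota_mk)

lemma rA_e1: "m \<in> I \<Longrightarrow> rA m (e m \<one>) \<ominus> \<one> \<in> J m"
  unfolding e_def using rA_mk[of "\<lambda>k. if k = m then \<one> else \<zero>" m] by simp

end

context covl
begin

lemma flat_right:
  assumes ffr: "ff_right B A (cov_iota B J I) TYPE('b \<times> nat)"
    and m: "m \<in> I" and n: "n \<in> I" and K: "ideal K B"
    and w: "w \<in> J m" and wL: "w \<in> K <+>\<^bsub>B\<^esub> J n"
  shows "w \<in> (J m \<inter> K) <+>\<^bsub>B\<^esub> J n"
proof -
  define L where "L = K <+>\<^bsub>B\<^esub> J n"
  define Q where "Q = (J m \<inter> K) <+>\<^bsub>B\<^esub> J n"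
  have Lid: "ideal L B" unfolding L_def by (simp add: add_ideals K idl n)
  have Qid: "ideal Q B" unfolding Q_def by (rule Qideal[OF m n K])
  interpret Lr: ideal L B by (rule Lid)
  interpret Qr: ideal Q B by (rule Qid)
  have wc: "w \<in> carrier B" using w Jsub[OF m] by blast
  define act where "act = (\<lambda>a b. a \<otimes>\<^bsub>A\<^esub> cov_iota B J I b)"
  have fl: "\<forall>(N :: ('b \<times> nat) set) addN zN act0 (N' :: ('b \<times> nat) set) addN' zN' act' f.
        lmod B N addN zN act0 \<and> lmod B N' addN' zN' act' \<and>
        lmod_hom B N' addN' act' N addN act0 f \<and> inj_on f N' \<longrightarrow>
        (\<forall>h\<in>fsums (carrier A \<times> N').
           fs_map (\<lambda>(a, n). (a, f n)) h
             \<in> tens_rel (carrier B) (carrier A) (add A) act N addN act0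
           \<longrightarrow> h \<in> tens_rel (carrier B) (carrier A) (add A) act N' addN' act')"
    using ffr unfolding ff_right_def act_def by blast
  have lm1: "lmod B (carrier B \<times> {0::nat}) (addP B) (zP B) (lactP B)" by (rule lmod_ideal[OF oneideal])
  have lm2: "lmod B (L \<times> {0::nat}) (addP B) (zP B) (lactP B)" by (rule lmod_ideal[OF Lid])
  have hom: "lmod_hom B (L \<times> {0::nat}) (addP B) (lactP B) (carrier B \<times> {0::nat}) (addP B) (lactP B) id"
    unfolding lmod_hom_def using Lr.Icarr by auto
  define h where "h = fs_single (e m \<one>, (w, 0::nat))"
  have hs: "h \<in> fsums (carrier A \<times> (L \<times> {0::nat}))"
    unfolding h_def using wL by (intro fsums_single) (auto simp: L_def e_in)
  interpret TR: tr "carrier B" "carrier A" "add A" act "carrier B \<times> {0::nat}" "addP B" "lactP B" .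
  interpret TR': tr "carrier B" "carrier A" "add A" act "L \<times> {0::nat}" "addP B" "lactP B" .
  have hT: "h \<in> TR.T"
  proof -
    have "TR.teq (fs_single (act (e m \<one>) w, (\<one>, 0))) (fs_single (e m \<one>, lactP B w (\<one>, 0)))"
      by (rule TR.teq_bal) (auto simp: wc e_in)
    moreover have "act (e m \<one>) w = \<zero>\<^bsub>A\<^esub>" unfolding act_def by (rule em1_zero[OF m w])
    moreover have "lactP B w (\<one>, 0) = (w, 0)" by (simp add: lactP_def wc)
    moreover have "fs_single (\<zero>\<^bsub>A\<^esub>, (\<one>, 0::nat)) \<in> TR.T"
      by (rule TR.T_zero_left) (simp_all add: zero_A_in zero_A_add)
    ultimately show ?thesis unfolding h_def by (metis TR.teq_T_right)
  qed
  have hT': "h \<in> TR'.T"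
  proof -
    have pre: "lmod B (carrier B \<times> {0::nat}) (addP B) (zP B) (lactP B) \<and> lmod B (L \<times> {0::nat}) (addP B) (zP B) (lactP B) \<and>
        lmod_hom B (L \<times> {0::nat}) (addP B) (lactP B) (carrier B \<times> {0::nat}) (addP B) (lactP B) id \<and> inj_on id (L \<times> {0::nat})"
      using lm1 lm2 hom by simp
    have "fs_map (\<lambda>(a, n). (a, id n)) h \<in> TR.T" using hT fs_map_id[of h] by simp
    then show ?thesis
      using fl[rule_format, OF pre hs] by simp
  qed
  have QG: "abelian_group (B Quot Q)" using Qr.quotient_is_ring ring.is_abelian_group by blast
  interpret QG: abelian_group "B Quot Q" by (rule QG)
  define phi where "phi = (\<lambda>p :: ('i \<Rightarrow> 'b set) \<times> ('b \<times> nat). Q +> (rA m (fst p) \<otimes> fst (snd p)))"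
  have QJ: "Q +> (x \<otimes> s) = Q +> (x' \<otimes> s)"
    if "x \<in> carrier B" "x' \<in> carrier B" "x \<ominus> x' \<in> J m" "s \<in> L" for x x' s
  proof (rule rc_eqI[OF Qid])
    have sc: "s \<in> carrier B" using that(4) Lr.Icarr by blast
    show "x \<otimes> s \<in> carrier B" "x' \<otimes> s \<in> carrier B" using that sc by auto
    have "x \<otimes> s \<ominus> x' \<otimes> s = (x \<ominus> x') \<otimes> s" using that sc by algebra
    then show "x \<otimes> s \<ominus> x' \<otimes> s \<in> Q" using JL(1)[OF m n K that(3)] that(4) by (simp add: L_def Q_def)
  qed
  have phiPi: "phi \<in> carrier A \<times> L \<times> {0::nat} \<rightarrow> carrier (B Quot Q)"
  proof
    fix p assume p: "p \<in> carrier A \<times> L \<times> {0::nat}"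
    have "rA m (fst p) \<otimes> fst (snd p) \<in> carrier B"
      using rA(1)[of "fst p" m] m p Lr.Icarr by auto
    then show "phi p \<in> carrier (B Quot Q)" unfolding phi_def quot_carrier by blast
  qed
  have "Psi (B Quot Q) phi h = \<zero>\<^bsub>B Quot Q\<^esub>"
  proof (rule QG.Psi_vanish[OF hT'])
    show "\<And>a a'. a \<in> carrier A \<Longrightarrow> a' \<in> carrier A \<Longrightarrow> a \<oplus>\<^bsub>A\<^esub> a' \<in> carrier A" by (rule A_add_in)
    show "\<And>p q. p \<in> L \<times> {0::nat} \<Longrightarrow> q \<in> L \<times> {0::nat} \<Longrightarrow> addP B p q \<in> L \<times> {0::nat}"
      by (auto simp: addP_def)
    show "\<And>a r. a \<in> carrier A \<Longrightarrow> r \<in> carrier B \<Longrightarrow> act a r \<in> carrier A"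
      unfolding act_def iota_mk by (auto intro!: A_mult_in mkA_in)
    show "\<And>p r. p \<in> L \<times> {0::nat} \<Longrightarrow> r \<in> carrier B \<Longrightarrow> lactP B r p \<in> L \<times> {0::nat}"
      by (auto simp: lactP_def Lr.I_l_closed)
    show "phi \<in> carrier A \<times> L \<times> {0::nat} \<rightarrow> carrier (B Quot Q)" by (rule phiPi)
  next
    fix a a' p assume a: "a \<in> carrier A" "a' \<in> carrier A" and p: "p \<in> L \<times> {0::nat}"
    have ra: "\<And>k. k \<in> I \<Longrightarrow> rA k a \<in> carrier B" "\<And>k. k \<in> I \<Longrightarrow> rA k a' \<in> carrier B" using rA a by auto
    have pc: "fst p \<in> carrier B" "fst p \<in> L" using p Lr.Icarr by auto
    have "rA m (a \<oplus>\<^bsub>A\<^esub> a') \<ominus> (rA m a \<oplus> rA m a') \<in> J m"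
      using A_add_rep[OF a] rA_mk[of "\<lambda>k. rA k a \<oplus> rA k a'" m] ra m by simp
    then have "phi (a \<oplus>\<^bsub>A\<^esub> a', p) = Q +> ((rA m a \<oplus> rA m a') \<otimes> fst p)"
      unfolding phi_def using QJ rA[OF A_add_in[OF a] m] ra m pc by simp
    also have "\<dots> = Q +> (rA m a \<otimes> fst p \<oplus> rA m a' \<otimes> fst p)" using ra m pc by (simp add: l_distr)
    also have "\<dots> = phi (a, p) \<oplus>\<^bsub>B Quot Q\<^esub> phi (a', p)"
      unfolding phi_def using ra m pc by (simp add: quot_add Qid)
    finally show "phi (a \<oplus>\<^bsub>A\<^esub> a', p) = phi (a, p) \<oplus>\<^bsub>B Quot Q\<^esub> phi (a', p)" .
  next
    fix a p p' assume a: "a \<in> carrier A" and p: "p \<in> L \<times> {0::nat}" "p' \<in> L \<times> {0::nat}"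
    have ra: "rA m a \<in> carrier B" using rA a m by auto
    have pc: "fst p \<in> carrier B" "fst p' \<in> carrier B" using p Lr.Icarr by auto
    show "phi (a, addP B p p') = phi (a, p) \<oplus>\<^bsub>B Quot Q\<^esub> phi (a, p')"
      unfolding phi_def addP_def using ra pc by (simp add: quot_add Qid r_distr)
  next
    fix a r p assume a: "a \<in> carrier A" and r: "r \<in> carrier B" and p: "p \<in> L \<times> {0::nat}"
    have ra: "\<And>k. k \<in> I \<Longrightarrow> rA k a \<in> carrier B" using rA a by auto
    have pc: "fst p \<in> carrier B" "fst p \<in> L" using p Lr.Icarr by auto
    have e1: "act a r = mkA (\<lambda>k. rA k a \<otimes> r)"
      unfolding act_def iota_mk using A_rep[OF a] ra r mkA_mult[of "\<lambda>k. rA k a" "\<lambda>_. r"] by simp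
    have "rA m (act a r) \<ominus> rA m a \<otimes> r \<in> J m"
      unfolding e1 using rA_mk[of "\<lambda>k. rA k a \<otimes> r" m] ra r m by simp
    moreover have "act a r \<in> carrier A" unfolding e1 using ra r by (intro mkA_in) simp
    ultimately have "phi (act a r, p) = Q +> ((rA m a \<otimes> r) \<otimes> fst p)"
      unfolding phi_def using QJ rA ra r m pc by simp
    also have "\<dots> = phi (a, lactP B r p)"
      unfolding phi_def lactP_def using ra m r pc by (simp add: m_assoc)
    finally show "phi (act a r, p) = phi (a, lactP B r p)" .
  qed
  moreover have "Psi (B Quot Q) phi h = phi (e m \<one>, (w, 0))"
    unfolding h_def
    by (rule QG.Psi_single[OF _ phiPi]) (use wL in \<open>auto simp: L_def e_in\<close>)
  ultimately have "Q +> (rA m (e m \<one>) \<otimes> w) = Q +> \<zero>"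
    unfolding phi_def by (simp add: quot_zero Qid)
  moreover have "Q +> (rA m (e m \<one>) \<otimes> w) = Q +> (\<one> \<otimes> w)"
    by (rule QJ[OF rA(1)[OF e_in[OF one_closed] m] one_closed rA_e1[OF m]]) (use wL in \<open>simp add: L_def\<close>)
  ultimately have "Q +> w = Q +> \<zero>" using wc by simp
  then have "w \<in> Q" using rc_eq[OF Qid wc zero_closed] wc by (simp add: a_minus_def)
  then show ?thesis by (simp add: Q_def)
qed

end

context covl
begin

lemma flat_left:
  assumes ffl: "ff_left B A (cov_iota B J I) TYPE('b \<times> nat)"
    and m: "m \<in> I" and n: "n \<in> I" and K: "ideal K B"
    and w: "w \<in> J m" and wL: "w \<in> K <+>\<^bsub>B\<^esub> J n"
  shows "w \<in> (J m \<inter> K) <+>\<^bsub>B\<^esub> J n"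
proof -
  define L where "L = K <+>\<^bsub>B\<^esub> J n"
  define Q where "Q = (J m \<inter> K) <+>\<^bsub>B\<^esub> J n"
  have Lid: "ideal L B" unfolding L_def by (simp add: add_ideals K idl n)
  have Qid: "ideal Q B" unfolding Q_def by (rule Qideal[OF m n K])
  interpret Lr: ideal L B by (rule Lid)
  interpret Qr: ideal Q B by (rule Qid)
  have wc: "w \<in> carrier B" using w Jsub[OF m] by blast
  define act where "act = (\<lambda>b a. cov_iota B J I b \<otimes>\<^bsub>A\<^esub> a)"
  have fl: "\<forall>(N :: ('b \<times> nat) set) addN zN act0 (N' :: ('b \<times> nat) set) addN' zN' act' f.
        rmod B N addN zN act0 \<and> rmod B N' addN' zN' act' \<and>
        rmod_hom B N' addN' act' N addN act0 f \<and> inj_on f N' \<longrightarrow>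
        (\<forall>h\<in>fsums (N' \<times> carrier A).
           fs_map (\<lambda>(n, a). (f n, a)) h
             \<in> tens_rel (carrier B) N addN act0 (carrier A) (add A) act
           \<longrightarrow> h \<in> tens_rel (carrier B) N' addN' act' (carrier A) (add A) act)"
    using ffl unfolding ff_left_def act_def by blast
  have lm1: "rmod B (carrier B \<times> {0::nat}) (addP B) (zP B) (ractP B)" by (rule rmod_ideal[OF oneideal])
  have lm2: "rmod B (L \<times> {0::nat}) (addP B) (zP B) (ractP B)" by (rule rmod_ideal[OF Lid])
  have hom: "rmod_hom B (L \<times> {0::nat}) (addP B) (ractP B) (carrier B \<times> {0::nat}) (addP B) (ractP B) id"
    unfolding rmod_hom_def using Lr.Icarr by auto
  define h where "h = fs_single ((w, 0::nat), e m \<one>)"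
  have hs: "h \<in> fsums ((L \<times> {0::nat}) \<times> carrier A)"
    unfolding h_def using wL by (intro fsums_single) (auto simp: L_def e_in)
  interpret TR: tr "carrier B" "carrier B \<times> {0::nat}" "addP B" "ractP B" "carrier A" "add A" act .
  interpret TR': tr "carrier B" "L \<times> {0::nat}" "addP B" "ractP B" "carrier A" "add A" act .
  have hT: "h \<in> TR.T"
  proof -
    have "TR.teq (fs_single (ractP B (\<one>, 0) w, e m \<one>)) (fs_single ((\<one>, 0), act w (e m \<one>)))"
      by (rule TR.teq_bal) (auto simp: wc e_in)
    moreover have "act w (e m \<one>) = \<zero>\<^bsub>A\<^esub>" unfolding act_def by (rule em1_zero'[OF m w])
    moreover have "ractP B (\<one>, 0) w = (w, 0)" by (simp add: ractP_def wc)
    moreover have "fs_single ((\<one>, 0::nat), \<zero>\<^bsub>A\<^esub>) \<in> TR.T"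
      by (rule TR.T_zero_right) (simp_all add: zero_A_in zero_A_add)
    ultimately show ?thesis unfolding h_def by (metis TR.teq_T_left)
  qed
  have hT': "h \<in> TR'.T"
  proof -
    have pre: "rmod B (carrier B \<times> {0::nat}) (addP B) (zP B) (ractP B) \<and> rmod B (L \<times> {0::nat}) (addP B) (zP B) (ractP B) \<and>
        rmod_hom B (L \<times> {0::nat}) (addP B) (ractP B) (carrier B \<times> {0::nat}) (addP B) (ractP B) id \<and> inj_on id (L \<times> {0::nat})"
      using lm1 lm2 hom by simp
    have "fs_map (\<lambda>(n, a). (id n, a)) h \<in> TR.T" using hT fs_map_id2[of h] by simp
    then show ?thesis
      using fl[rule_format, OF pre hs] by simp
  qed
  have QG: "abelian_group (B Quot Q)" using Qr.quotient_is_ring ring.is_abelian_group by blast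
  interpret QG: abelian_group "B Quot Q" by (rule QG)
  define phi where "phi = (\<lambda>p :: ('b \<times> nat) \<times> ('i \<Rightarrow> 'b set). Q +> (fst (fst p) \<otimes> rA m (snd p)))"
  have QJ: "Q +> (s \<otimes> x) = Q +> (s \<otimes> x')"
    if "x \<in> carrier B" "x' \<in> carrier B" "x \<ominus> x' \<in> J m" "s \<in> L" for x x' s
  proof (rule rc_eqI[OF Qid])
    have sc: "s \<in> carrier B" using that(4) Lr.Icarr by blast
    show "s \<otimes> x \<in> carrier B" "s \<otimes> x' \<in> carrier B" using that sc by auto
    have "s \<otimes> x \<ominus> s \<otimes> x' = s \<otimes> (x \<ominus> x')" using that sc by algebra
    then show "s \<otimes> x \<ominus> s \<otimes> x' \<in> Q" using JL(2)[OF m n K that(3)] that(4) by (simp add: L_def Q_def)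
  qed
  have phiPi: "phi \<in> (L \<times> {0::nat}) \<times> carrier A \<rightarrow> carrier (B Quot Q)"
  proof
    fix p assume p: "p \<in> (L \<times> {0::nat}) \<times> carrier A"
    have "fst (fst p) \<otimes> rA m (snd p) \<in> carrier B"
      using rA(1)[of "snd p" m] m p Lr.Icarr by auto
    then show "phi p \<in> carrier (B Quot Q)" unfolding phi_def quot_carrier by blast
  qed
  have "Psi (B Quot Q) phi h = \<zero>\<^bsub>B Quot Q\<^esub>"
  proof (rule QG.Psi_vanish[OF hT'])
    show "\<And>p q. p \<in> L \<times> {0::nat} \<Longrightarrow> q \<in> L \<times> {0::nat} \<Longrightarrow> addP B p q \<in> L \<times> {0::nat}"
      by (auto simp: addP_def)
    show "\<And>a a'. a \<in> carrier A \<Longrightarrow> a' \<in> carrier A \<Longrightarrow> a \<oplus>\<^bsub>A\<^esub> a' \<in> carrier A" by (rule A_add_in)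
    show "\<And>p r. p \<in> L \<times> {0::nat} \<Longrightarrow> r \<in> carrier B \<Longrightarrow> ractP B p r \<in> L \<times> {0::nat}"
      by (auto simp: ractP_def Lr.I_r_closed)
    show "\<And>a r. a \<in> carrier A \<Longrightarrow> r \<in> carrier B \<Longrightarrow> act r a \<in> carrier A"
      unfolding act_def iota_mk by (auto intro!: A_mult_in mkA_in)
    show "phi \<in> (L \<times> {0::nat}) \<times> carrier A \<rightarrow> carrier (B Quot Q)" by (rule phiPi)
  next
    fix p p' a assume p: "p \<in> L \<times> {0::nat}" "p' \<in> L \<times> {0::nat}" and a: "a \<in> carrier A"
    have ra: "rA m a \<in> carrier B" using rA a m by auto
    have pc: "fst p \<in> carrier B" "fst p' \<in> carrier B" using p Lr.Icarr by auto
    show "phi (addP B p p', a) = phi (p, a) \<oplus>\<^bsub>B Quot Q\<^esub> phi (p', a)"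
      unfolding phi_def addP_def using ra pc by (simp add: quot_add Qid l_distr)
  next
    fix p a a' assume p: "p \<in> L \<times> {0::nat}" and a: "a \<in> carrier A" "a' \<in> carrier A"
    have ra: "\<And>k. k \<in> I \<Longrightarrow> rA k a \<in> carrier B" "\<And>k. k \<in> I \<Longrightarrow> rA k a' \<in> carrier B" using rA a by auto
    have pc: "fst p \<in> carrier B" "fst p \<in> L" using p Lr.Icarr by auto
    have "rA m (a \<oplus>\<^bsub>A\<^esub> a') \<ominus> (rA m a \<oplus> rA m a') \<in> J m"
      using A_add_rep[OF a] rA_mk[of "\<lambda>k. rA k a \<oplus> rA k a'" m] ra m by simp
    then have "phi (p, a \<oplus>\<^bsub>A\<^esub> a') = Q +> (fst p \<otimes> (rA m a \<oplus> rA m a'))"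
      unfolding phi_def using QJ rA[OF A_add_in[OF a] m] ra m pc by simp
    also have "\<dots> = Q +> (fst p \<otimes> rA m a \<oplus> fst p \<otimes> rA m a')" using ra m pc by (simp add: r_distr)
    also have "\<dots> = phi (p, a) \<oplus>\<^bsub>B Quot Q\<^esub> phi (p, a')"
      unfolding phi_def using ra m pc by (simp add: quot_add Qid)
    finally show "phi (p, a \<oplus>\<^bsub>A\<^esub> a') = phi (p, a) \<oplus>\<^bsub>B Quot Q\<^esub> phi (p, a')" .
  next
    fix p r a assume p: "p \<in> L \<times> {0::nat}" and r: "r \<in> carrier B" and a: "a \<in> carrier A"
    have ra: "\<And>k. k \<in> I \<Longrightarrow> rA k a \<in> carrier B" using rA a by auto
    have pc: "fst p \<in> carrier B" "fst p \<in> L" using p Lr.Icarr by auto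
    have e1: "act r a = mkA (\<lambda>k. r \<otimes> rA k a)"
      unfolding act_def iota_mk using A_rep[OF a] ra r mkA_mult[of "\<lambda>_. r" "\<lambda>k. rA k a"] by simp
    have "rA m (act r a) \<ominus> r \<otimes> rA m a \<in> J m"
      unfolding e1 using rA_mk[of "\<lambda>k. r \<otimes> rA k a" m] ra r m by simp
    moreover have "act r a \<in> carrier A" unfolding e1 using ra r by (intro mkA_in) simp
    ultimately have "phi (p, act r a) = Q +> (fst p \<otimes> (r \<otimes> rA m a))"
      unfolding phi_def using QJ rA ra r m pc by simp
    also have "\<dots> = phi (ractP B p r, a)"
      unfolding phi_def ractP_def using ra m r pc by (simp add: m_assoc)
    finally show "phi (ractP B p r, a) = phi (p, act r a)" by simp
  qed
  moreover have "Psi (B Quot Q) phi h = phi ((w, 0), e m \<one>)"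
    unfolding h_def
    by (rule QG.Psi_single[OF _ phiPi]) (use wL in \<open>auto simp: L_def e_in\<close>)
  ultimately have "Q +> (w \<otimes> rA m (e m \<one>)) = Q +> \<zero>"
    unfolding phi_def by (simp add: quot_zero Qid)
  moreover have "Q +> (w \<otimes> rA m (e m \<one>)) = Q +> (w \<otimes> \<one>)"
    by (rule QJ[OF rA(1)[OF e_in[OF one_closed] m] one_closed rA_e1[OF m]]) (use wL in \<open>simp add: L_def\<close>)
  ultimately have "Q +> w = Q +> \<zero>" using wc by simp
  then have "w \<in> Q" using rc_eq[OF Qid wc zero_closed] wc by (simp add: a_minus_def)
  then show ?thesis by (simp add: Q_def)
qed

lemma FlatP_of:
  assumes H: "\<And>m n K w. m \<in> I \<Longrightarrow> n \<in> I \<Longrightarrow> ideal K B \<Longrightarrow> w \<in> J m \<Longrightarrow> w \<in> K <+>\<^bsub>B\<^esub> J n \<Longrightarrow>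
      w \<in> (J m \<inter> K) <+>\<^bsub>B\<^esub> J n"
  shows FlatP
  unfolding FlatP_def
proof (intro ballI allI impI subsetI)
  fix m n K y assume m: "m \<in> I" and n: "n \<in> I" and K: "ideal K B"
    and y: "y \<in> (K <+>\<^bsub>B\<^esub> J n) \<inter> (J m <+>\<^bsub>B\<^esub> J n)"
  interpret Kr: ideal K B by fact
  have Lid: "ideal (K <+>\<^bsub>B\<^esub> J n) B" by (simp add: add_ideals K idl n)
  interpret Lr: ideal "K <+>\<^bsub>B\<^esub> J n" B by (rule Lid)
  obtain w t where w: "w \<in> J m" and t: "t \<in> J n" and yt: "y = w \<oplus> t" using y by (auto simp: sa_mem)
  have wc: "w \<in> carrier B" using w Jsub[OF m] by blast
  have tc: "t \<in> carrier B" using t Jsub[OF n] by blast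
  have "w = y \<ominus> t" using yt wc tc by algebra
  moreover have "t \<in> K <+>\<^bsub>B\<^esub> J n" using Jr[OF n n] t sa_ideal_right[OF K idl[OF n]] by blast
  ultimately have wL: "w \<in> K <+>\<^bsub>B\<^esub> J n" using y by (simp add: Lr.a_closed a_minus_def)
  have "w \<in> (J m \<inter> K) <+>\<^bsub>B\<^esub> J n" by (rule H[OF m n K w wL])
  then obtain a b where a: "a \<in> J m \<inter> K" and b: "b \<in> J n" and wab: "w = a \<oplus> b" by (auto simp: sa_mem)
  have ac: "a \<in> carrier B" using a Kr.Icarr by blast
  have bc: "b \<in> carrier B" using b Jsub[OF n] by blast
  have "y = a \<oplus> (b \<oplus> t)" using yt wab ac bc tc by (simp add: a_assoc)
  moreover have "b \<oplus> t \<in> J n" using b t idl[OF n] by (simp add: additive_subgroup.a_closed ideal.axioms(1))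
  ultimately show "y \<in> (J m \<inter> K) <+>\<^bsub>B\<^esub> J n" using a unfolding sa_mem by blast
qed

lemma part2:
  assumes "ff_left B A (cov_iota B J I) TYPE('b \<times> nat) \<or> ff_right B A (cov_iota B J I) TYPE('b \<times> nat)"
  shows "complete_covering B J I"
proof (rule complete_from_flat, rule FlatP_of)
  fix m n K w assume "m \<in> I" "n \<in> I" "ideal K B" "w \<in> J m" "w \<in> K <+>\<^bsub>B\<^esub> J n"
  then show "w \<in> (J m \<inter> K) <+>\<^bsub>B\<^esub> J n" using assms flat_left flat_right by blast
qed

end

theorem theorem3p4:
  fixes K :: "('k,'e) ring_scheme" and B :: "('b,'c) ring_scheme" and phi :: "'k \<Rightarrow> 'b"
    and J :: "'i \<Rightarrow> 'b set" and I :: "'i set"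
  assumes "k_algebra K B phi"
    and "covering B J I"
  shows "(complete_covering B J I \<longrightarrow>
            galois_coring (cov_A B J I) (cov_C B J I) (cov_lact B J I) (cov_ract B J I)
              (cov_Delta B J I) (cov_eps B J I) (cov_g B J I))
       \<and> ((ff_left B (cov_A B J I) (cov_iota B J I) TYPE('b \<times> nat)
           \<or> ff_right B (cov_A B J I) (cov_iota B J I) TYPE('b \<times> nat))
          \<longrightarrow> complete_covering B J I)"
proof -
  have ringB: "ring B" using assms(1) by (simp add: k_algebra_def)
  have finI: "finite I" and idl: "\<And>i. i \<in> I \<Longrightarrow> ideal (J i) B"
    using assms(2) by (auto simp: covering_def)
  interpret cv: covl B J I
    by (rule covl.intro[OF ringB], rule covl_axioms.intro[OF finI idl])
  show ?thesis using cv.galois cv.part2 by blast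
qed

end
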